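(* Let $\mathcal E$ be a length exact category satisfying the Jordan–Hölder property. Then $\mathcal P(\operatorname{simp}\mathcal E)\to\operatorname{Serre}(\mathcal E)$, $\mathcal X\mapsto\langle\mathcal X\rangle_{\mathrm{Serre}}$, is an inclusion-preserving bijection.
   Context: An exact category $\mathcal E$ is an additive full subcategory of an abelian category closed under extensions, with conflations the short exact sequences with all terms in $\mathcal E$ and inflations the first maps of conflations. An admissible subobject of $X$ is an equivalence class of inflations $Y\to X$; an admissible subobject series $0=X_0\le\cdots\le X_n=X$ is proper of length $n$ if all factors $X_i/X_{i-1}$ are nonzero. $X$ is of finite length if the lengths of its proper admissible subobject series are bounded; $\mathcal E$ is length if all objects are of finite length. A simple object is a nonzero object whose only admissible subobjects are $0$ and itself; $\operatorname{simp}\mathcal E$ is the set of their isomorphism classes. A composition series is an admissible subobject series with all factors simple; two series are isomorphic if they have the same length $n$ and there is a permutation $\sigma$ with $X_i/X_{i-1}\cong Y_{\sigma(i)}/Y_{\sigma(i)-1}$. $\mathcal E$ satisfies the Jordan–Hölder property if for each object all its composition series are isomorphic. A Serre subcategory is a full additive subcategory $\mathcal S$ closed under isomorphisms such that for each conflation $0\to X\to Y\to Z\to0$, $Y\in\mathcal S$ iff $X,Z\in\mathcal S$; $\langle\mathcal X\rangle_{\mathrm{Serre}}$ is the smallest one containing $\mathcal X$. *)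

theory Defs
  imports Main
begin

(* An abstract (ambient) preadditive category, given by its data:
   objects, arrows, domain, codomain, composition (ccomp C g f = g o f),
   identities, and the abelian group structure on hom-sets. *)
record ('o, 'm) acat =
  Ob :: "'o set"
  Ar :: "'m set"
  cdom :: "'m \<Rightarrow> 'o"
  ccod :: "'m \<Rightarrow> 'o"
  ccomp :: "'m \<Rightarrow> 'm \<Rightarrow> 'm"
  cid :: "'o \<Rightarrow> 'm"
  cadd :: "'m \<Rightarrow> 'm \<Rightarrow> 'm"
  cneg :: "'m \<Rightarrow> 'm"
  czero :: "'o \<Rightarrow> 'o \<Rightarrow> 'm"

definition hom :: "('o,'m) acat \<Rightarrow> 'o \<Rightarrow> 'o \<Rightarrow> 'm set" where
  "hom C A B = {f \<in> Ar C. cdom C f = A \<and> ccod C f = B}"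

definition category :: "('o,'m) acat \<Rightarrow> bool" where
  "category C \<longleftrightarrow>
     (\<forall>f\<in>Ar C. cdom C f \<in> Ob C \<and> ccod C f \<in> Ob C) \<and>
     (\<forall>A\<in>Ob C. cid C A \<in> hom C A A) \<and>
     (\<forall>A B D f g. f \<in> hom C A B \<longrightarrow> g \<in> hom C B D \<longrightarrow> ccomp C g f \<in> hom C A D) \<and>
     (\<forall>A B D F f g h. f \<in> hom C A B \<longrightarrow> g \<in> hom C B D \<longrightarrow> h \<in> hom C D F \<longrightarrow>
        ccomp C h (ccomp C g f) = ccomp C (ccomp C h g) f) \<and>
     (\<forall>A B f. f \<in> hom C A B \<longrightarrow> ccomp C (cid C B) f = f \<and> ccomp C f (cid C A) = f)"

definition preadditive :: "('o,'m) acat \<Rightarrow> bool" where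
  "preadditive C \<longleftrightarrow> category C \<and>
     (\<forall>A\<in>Ob C. \<forall>B\<in>Ob C.
        czero C A B \<in> hom C A B \<and>
        (\<forall>f\<in>hom C A B. cneg C f \<in> hom C A B) \<and>
        (\<forall>f\<in>hom C A B. \<forall>g\<in>hom C A B. cadd C f g \<in> hom C A B) \<and>
        (\<forall>f\<in>hom C A B. \<forall>g\<in>hom C A B. \<forall>h\<in>hom C A B.
            cadd C (cadd C f g) h = cadd C f (cadd C g h)) \<and>
        (\<forall>f\<in>hom C A B. \<forall>g\<in>hom C A B. cadd C f g = cadd C g f) \<and>
        (\<forall>f\<in>hom C A B. cadd C (czero C A B) f = f) \<and>
        (\<forall>f\<in>hom C A B. cadd C f (cneg C f) = czero C A B)) \<and>
     (\<forall>A B D f g h. f \<in> hom C A B \<longrightarrow> g \<in> hom C A B \<longrightarrow> h \<in> hom C B D \<longrightarrow>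
        ccomp C h (cadd C f g) = cadd C (ccomp C h f) (ccomp C h g)) \<and>
     (\<forall>A B D f g h. f \<in> hom C A B \<longrightarrow> g \<in> hom C B D \<longrightarrow> h \<in> hom C B D \<longrightarrow>
        ccomp C (cadd C g h) f = cadd C (ccomp C g f) (ccomp C h f))"

definition zero_obj :: "('o,'m) acat \<Rightarrow> 'o \<Rightarrow> bool" where
  "zero_obj C Z \<longleftrightarrow> Z \<in> Ob C \<and>
     (\<forall>A\<in>Ob C. (\<exists>!f. f \<in> hom C Z A) \<and> (\<exists>!f. f \<in> hom C A Z))"

definition is_biproduct :: "('o,'m) acat \<Rightarrow> 'o \<Rightarrow> 'o \<Rightarrow> 'o \<Rightarrow> 'm \<Rightarrow> 'm \<Rightarrow> 'm \<Rightarrow> 'm \<Rightarrow> bool" where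
  "is_biproduct C A B P i1 i2 p1 p2 \<longleftrightarrow> P \<in> Ob C \<and>
     i1 \<in> hom C A P \<and> i2 \<in> hom C B P \<and> p1 \<in> hom C P A \<and> p2 \<in> hom C P B \<and>
     ccomp C p1 i1 = cid C A \<and> ccomp C p2 i2 = cid C B \<and>
     ccomp C p1 i2 = czero C B A \<and> ccomp C p2 i1 = czero C A B \<and>
     cadd C (ccomp C i1 p1) (ccomp C i2 p2) = cid C P"

definition is_kernel :: "('o,'m) acat \<Rightarrow> 'm \<Rightarrow> 'm \<Rightarrow> bool" where
  "is_kernel C k f \<longleftrightarrow> k \<in> Ar C \<and> f \<in> Ar C \<and> ccod C k = cdom C f \<and>
     ccomp C f k = czero C (cdom C k) (ccod C f) \<and>
     (\<forall>T\<in>Ob C. \<forall>g\<in>hom C T (cdom C f). ccomp C f g = czero C T (ccod C f) \<longrightarrow>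
        (\<exists>!u. u \<in> hom C T (cdom C k) \<and> ccomp C k u = g))"

definition is_cokernel :: "('o,'m) acat \<Rightarrow> 'm \<Rightarrow> 'm \<Rightarrow> bool" where
  "is_cokernel C c f \<longleftrightarrow> c \<in> Ar C \<and> f \<in> Ar C \<and> ccod C f = cdom C c \<and>
     ccomp C c f = czero C (cdom C f) (ccod C c) \<and>
     (\<forall>T\<in>Ob C. \<forall>g\<in>hom C (ccod C f) T. ccomp C g f = czero C (cdom C f) T \<longrightarrow>
        (\<exists>!u. u \<in> hom C (ccod C c) T \<and> ccomp C u c = g))"

definition mono :: "('o,'m) acat \<Rightarrow> 'm \<Rightarrow> bool" where
  "mono C f \<longleftrightarrow> f \<in> Ar C \<and>
     (\<forall>T\<in>Ob C. \<forall>g\<in>hom C T (cdom C f). \<forall>h\<in>hom C T (cdom C f).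
        ccomp C f g = ccomp C f h \<longrightarrow> g = h)"

definition epi :: "('o,'m) acat \<Rightarrow> 'm \<Rightarrow> bool" where
  "epi C f \<longleftrightarrow> f \<in> Ar C \<and>
     (\<forall>T\<in>Ob C. \<forall>g\<in>hom C (ccod C f) T. \<forall>h\<in>hom C (ccod C f) T.
        ccomp C g f = ccomp C h f \<longrightarrow> g = h)"

definition abelian :: "('o,'m) acat \<Rightarrow> bool" where
  "abelian C \<longleftrightarrow> preadditive C \<and> (\<exists>Z. zero_obj C Z) \<and>
     (\<forall>A\<in>Ob C. \<forall>B\<in>Ob C. \<exists>P i1 i2 p1 p2. is_biproduct C A B P i1 i2 p1 p2) \<and>
     (\<forall>f\<in>Ar C. \<exists>k. is_kernel C k f) \<and>
     (\<forall>f\<in>Ar C. \<exists>c. is_cokernel C c f) \<and>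
     (\<forall>f. mono C f \<longrightarrow> (\<exists>g. is_kernel C f g)) \<and>
     (\<forall>f. epi C f \<longrightarrow> (\<exists>g. is_cokernel C f g))"

definition iso_obj :: "('o,'m) acat \<Rightarrow> 'o \<Rightarrow> 'o \<Rightarrow> bool" where
  "iso_obj C X Y \<longleftrightarrow> (\<exists>f g. f \<in> hom C X Y \<and> g \<in> hom C Y X \<and>
      ccomp C g f = cid C X \<and> ccomp C f g = cid C Y)"

definition iso_mor :: "('o,'m) acat \<Rightarrow> 'm \<Rightarrow> bool" where
  "iso_mor C f \<longleftrightarrow> f \<in> Ar C \<and> (\<exists>g \<in> hom C (ccod C f) (cdom C f).
      ccomp C g f = cid C (cdom C f) \<and> ccomp C f g = cid C (ccod C f))"

definition conflation :: "('o,'m) acat \<Rightarrow> 'o set \<Rightarrow> 'm \<Rightarrow> 'm \<Rightarrow> bool" where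
  "conflation C E i p \<longleftrightarrow> is_kernel C i p \<and> is_cokernel C p i \<and>
     cdom C i \<in> E \<and> ccod C i \<in> E \<and> ccod C p \<in> E"

definition inflation :: "('o,'m) acat \<Rightarrow> 'o set \<Rightarrow> 'm \<Rightarrow> bool" where
  "inflation C E i \<longleftrightarrow> (\<exists>p. conflation C E i p)"

(* E is an exact category: an additive full subcategory of the abelian
   category C closed under extensions *)
definition exact_cat :: "('o,'m) acat \<Rightarrow> 'o set \<Rightarrow> bool" where
  "exact_cat C E \<longleftrightarrow> abelian C \<and> E \<subseteq> Ob C \<and>
     (\<exists>Z\<in>E. zero_obj C Z) \<and>
     (\<forall>A\<in>E. \<forall>B\<in>E. \<forall>P i1 i2 p1 p2. is_biproduct C A B P i1 i2 p1 p2 \<longrightarrow> P \<in> E) \<and>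
     (\<forall>i p. is_kernel C i p \<and> is_cokernel C p i \<and> cdom C i \<in> E \<and> ccod C p \<in> E
        \<longrightarrow> ccod C i \<in> E)"

(* an admissible subobject series 0 = X_0 >-> X_1 >-> ... >-> X_n = X of length n,
   given by objects Xs k and inflations fs k : Xs (k-1) >-> Xs k, 1 <= k <= n *)
definition subobj_series ::
  "('o,'m) acat \<Rightarrow> 'o set \<Rightarrow> 'o \<Rightarrow> nat \<Rightarrow> (nat \<Rightarrow> 'o) \<Rightarrow> (nat \<Rightarrow> 'm) \<Rightarrow> bool" where
  "subobj_series C E X n Xs fs \<longleftrightarrow> zero_obj C (Xs 0) \<and> Xs n = X \<and>
     (\<forall>k\<in>{1..n}. inflation C E (fs k) \<and> cdom C (fs k) = Xs (k - 1) \<and> ccod C (fs k) = Xs k)"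

(* Z is (a representative of) the factor X_k / X_(k-1) *)
definition series_factor :: "('o,'m) acat \<Rightarrow> 'o set \<Rightarrow> (nat \<Rightarrow> 'm) \<Rightarrow> nat \<Rightarrow> 'o \<Rightarrow> bool" where
  "series_factor C E fs k Z \<longleftrightarrow> (\<exists>p. conflation C E (fs k) p \<and> ccod C p = Z)"

definition proper_series ::
  "('o,'m) acat \<Rightarrow> 'o set \<Rightarrow> 'o \<Rightarrow> nat \<Rightarrow> (nat \<Rightarrow> 'o) \<Rightarrow> (nat \<Rightarrow> 'm) \<Rightarrow> bool" where
  "proper_series C E X n Xs fs \<longleftrightarrow> subobj_series C E X n Xs fs \<and>
     (\<forall>k\<in>{1..n}. \<forall>Z. series_factor C E fs k Z \<longrightarrow> \<not> zero_obj C Z)"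

definition finite_length :: "('o,'m) acat \<Rightarrow> 'o set \<Rightarrow> 'o \<Rightarrow> bool" where
  "finite_length C E X \<longleftrightarrow> (\<exists>N. \<forall>n Xs fs. proper_series C E X n Xs fs \<longrightarrow> n \<le> N)"

definition length_cat :: "('o,'m) acat \<Rightarrow> 'o set \<Rightarrow> bool" where
  "length_cat C E \<longleftrightarrow> (\<forall>X\<in>E. finite_length C E X)"

definition simple_obj :: "('o,'m) acat \<Rightarrow> 'o set \<Rightarrow> 'o \<Rightarrow> bool" where
  "simple_obj C E S \<longleftrightarrow> S \<in> E \<and> \<not> zero_obj C S \<and>
     (\<forall>i. inflation C E i \<and> ccod C i = S \<longrightarrow> zero_obj C (cdom C i) \<or> iso_mor C i)"

definition composition_series ::
  "('o,'m) acat \<Rightarrow> 'o set \<Rightarrow> 'o \<Rightarrow> nat \<Rightarrow> (nat \<Rightarrow> 'o) \<Rightarrow> (nat \<Rightarrow> 'm) \<Rightarrow> bool" where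
  "composition_series C E X n Xs fs \<longleftrightarrow> subobj_series C E X n Xs fs \<and>
     (\<forall>k\<in>{1..n}. \<forall>Z. series_factor C E fs k Z \<longrightarrow> simple_obj C E Z)"

definition jordan_hoelder :: "('o,'m) acat \<Rightarrow> 'o set \<Rightarrow> bool" where
  "jordan_hoelder C E \<longleftrightarrow>
     (\<forall>X\<in>E. \<forall>n Xs fs m Ys gs.
        composition_series C E X n Xs fs \<and> composition_series C E X m Ys gs \<longrightarrow>
        n = m \<and> (\<exists>\<sigma>. bij_betw \<sigma> {1..n} {1..n} \<and>
           (\<forall>k\<in>{1..n}. \<exists>Z Z'. series_factor C E fs k Z \<and> series_factor C E gs (\<sigma> k) Z'
              \<and> iso_obj C Z Z')))"

definition iso_class :: "('o,'m) acat \<Rightarrow> 'o set \<Rightarrow> 'o \<Rightarrow> 'o set" where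
  "iso_class C E X = {Y \<in> E. iso_obj C Y X}"

definition simp_classes :: "('o,'m) acat \<Rightarrow> 'o set \<Rightarrow> 'o set set" where
  "simp_classes C E = {iso_class C E S | S. simple_obj C E S}"

definition serre_subcat :: "('o,'m) acat \<Rightarrow> 'o set \<Rightarrow> 'o set \<Rightarrow> bool" where
  "serre_subcat C E S \<longleftrightarrow> S \<subseteq> E \<and> (\<exists>Z\<in>S. zero_obj C Z) \<and>
     (\<forall>X\<in>S. \<forall>Y\<in>E. iso_obj C X Y \<longrightarrow> Y \<in> S) \<and>
     (\<forall>A\<in>S. \<forall>B\<in>S. \<forall>P i1 i2 p1 p2. is_biproduct C A B P i1 i2 p1 p2 \<longrightarrow> P \<in> S) \<and>
     (\<forall>i p. conflation C E i p \<longrightarrow>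
        (ccod C i \<in> S \<longleftrightarrow> cdom C i \<in> S \<and> ccod C p \<in> S))"

definition serre_subcats :: "('o,'m) acat \<Rightarrow> 'o set \<Rightarrow> 'o set set" where
  "serre_subcats C E = {S. serre_subcat C E S}"

definition serre_closure :: "('o,'m) acat \<Rightarrow> 'o set \<Rightarrow> 'o set \<Rightarrow> 'o set" where
  "serre_closure C E X = \<Inter> {S. serre_subcat C E S \<and> X \<subseteq> S}"

end

theory Submission
  imports Defs
begin

locale abcat =
  fixes C :: "('o,'m) acat"
  assumes abel: "abelian C"
begin

abbreviation cmp (infixl "\<cdot>" 70) where "g \<cdot> f \<equiv> ccomp C g f"
abbreviation pls (infixl "\<oplus>" 65) where "f \<oplus> g \<equiv> cadd C f g"

lemma pre: "preadditive C" using abel unfolding abelian_def by blast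
lemma cat: "category C" using pre unfolding preadditive_def by blast

lemma pre': "category C \<and> (\<forall>A\<in>Ob C. \<forall>B\<in>Ob C.
        czero C A B \<in> hom C A B \<and>
        (\<forall>f\<in>hom C A B. cneg C f \<in> hom C A B) \<and>
        (\<forall>f\<in>hom C A B. \<forall>g\<in>hom C A B. cadd C f g \<in> hom C A B) \<and>
        (\<forall>f\<in>hom C A B. \<forall>g\<in>hom C A B. \<forall>h\<in>hom C A B.
            cadd C (cadd C f g) h = cadd C f (cadd C g h)) \<and>
        (\<forall>f\<in>hom C A B. \<forall>g\<in>hom C A B. cadd C f g = cadd C g f) \<and>
        (\<forall>f\<in>hom C A B. cadd C (czero C A B) f = f) \<and>
        (\<forall>f\<in>hom C A B. cadd C f (cneg C f) = czero C A B)) \<and>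
     (\<forall>A B D f g h. f \<in> hom C A B \<longrightarrow> g \<in> hom C A B \<longrightarrow> h \<in> hom C B D \<longrightarrow>
        ccomp C h (cadd C f g) = cadd C (ccomp C h f) (ccomp C h g)) \<and>
     (\<forall>A B D f g h. f \<in> hom C A B \<longrightarrow> g \<in> hom C B D \<longrightarrow> h \<in> hom C B D \<longrightarrow>
        ccomp C (cadd C g h) f = cadd C (ccomp C g f) (ccomp C h f))"
  using pre unfolding preadditive_def .
lemma cat': "(\<forall>f\<in>Ar C. cdom C f \<in> Ob C \<and> ccod C f \<in> Ob C) \<and>
     (\<forall>A\<in>Ob C. cid C A \<in> hom C A A) \<and>
     (\<forall>A B D f g. f \<in> hom C A B \<longrightarrow> g \<in> hom C B D \<longrightarrow> ccomp C g f \<in> hom C A D) \<and>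
     (\<forall>A B D F f g h. f \<in> hom C A B \<longrightarrow> g \<in> hom C B D \<longrightarrow> h \<in> hom C D F \<longrightarrow>
        ccomp C h (ccomp C g f) = ccomp C (ccomp C h g) f) \<and>
     (\<forall>A B f. f \<in> hom C A B \<longrightarrow> ccomp C (cid C B) f = f \<and> ccomp C f (cid C A) = f)"
  using cat unfolding category_def .

lemma ar_ob: "f \<in> Ar C \<Longrightarrow> cdom C f \<in> Ob C \<and> ccod C f \<in> Ob C"
  using cat'[THEN conjunct1] by blast
lemma homI: "f \<in> Ar C \<Longrightarrow> f \<in> hom C (cdom C f) (ccod C f)" by (simp add: hom_def)
lemma homD: "f \<in> hom C A B \<Longrightarrow> f \<in> Ar C \<and> cdom C f = A \<and> ccod C f = B" by (simp add: hom_def)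
lemma hom_ob: "f \<in> hom C A B \<Longrightarrow> A \<in> Ob C \<and> B \<in> Ob C" using ar_ob homD by blast
lemma id_hom: "A \<in> Ob C \<Longrightarrow> cid C A \<in> hom C A A"
  using cat'[THEN conjunct2, THEN conjunct1] by blast
lemma comp_hom: "f \<in> hom C A B \<Longrightarrow> g \<in> hom C B D \<Longrightarrow> g \<cdot> f \<in> hom C A D"
  using cat'[THEN conjunct2, THEN conjunct2, THEN conjunct1, rule_format] .
lemma assoc: "f \<in> hom C A B \<Longrightarrow> g \<in> hom C B D \<Longrightarrow> h \<in> hom C D F \<Longrightarrow> h \<cdot> (g \<cdot> f) = (h \<cdot> g) \<cdot> f"
  using cat'[THEN conjunct2, THEN conjunct2, THEN conjunct2, THEN conjunct1, rule_format] .
lemma id_l: "f \<in> hom C A B \<Longrightarrow> cid C B \<cdot> f = f"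
  using cat'[THEN conjunct2, THEN conjunct2, THEN conjunct2, THEN conjunct2, rule_format] by blast
lemma id_r: "f \<in> hom C A B \<Longrightarrow> f \<cdot> cid C A = f"
  using cat'[THEN conjunct2, THEN conjunct2, THEN conjunct2, THEN conjunct2, rule_format] by blast

lemma grp: "f \<in> hom C A B \<Longrightarrow> czero C A B \<in> hom C A B \<and>
        (\<forall>f\<in>hom C A B. cneg C f \<in> hom C A B) \<and>
        (\<forall>f\<in>hom C A B. \<forall>g\<in>hom C A B. cadd C f g \<in> hom C A B) \<and>
        (\<forall>f\<in>hom C A B. \<forall>g\<in>hom C A B. \<forall>h\<in>hom C A B.
            cadd C (cadd C f g) h = cadd C f (cadd C g h)) \<and>
        (\<forall>f\<in>hom C A B. \<forall>g\<in>hom C A B. cadd C f g = cadd C g f) \<and>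
        (\<forall>f\<in>hom C A B. cadd C (czero C A B) f = f) \<and>
        (\<forall>f\<in>hom C A B. cadd C f (cneg C f) = czero C A B)"
  using pre'[THEN conjunct2, THEN conjunct1, rule_format] hom_ob by blast

lemma zero_hom: "A \<in> Ob C \<Longrightarrow> B \<in> Ob C \<Longrightarrow> czero C A B \<in> hom C A B"
  using pre'[THEN conjunct2, THEN conjunct1, rule_format] by blast
lemma neg_hom: "f \<in> hom C A B \<Longrightarrow> cneg C f \<in> hom C A B"
  using grp[THEN conjunct2, THEN conjunct1] by blast
lemma add_hom: "f \<in> hom C A B \<Longrightarrow> g \<in> hom C A B \<Longrightarrow> f \<oplus> g \<in> hom C A B"
  using grp[THEN conjunct2, THEN conjunct2, THEN conjunct1] by blast
lemma add_assoc: "f \<in> hom C A B \<Longrightarrow> g \<in> hom C A B \<Longrightarrow> h \<in> hom C A B \<Longrightarrow> (f \<oplus> g) \<oplus> h = f \<oplus> (g \<oplus> h)"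
  using grp[THEN conjunct2, THEN conjunct2, THEN conjunct2, THEN conjunct1] by blast
lemma add_comm: "f \<in> hom C A B \<Longrightarrow> g \<in> hom C A B \<Longrightarrow> f \<oplus> g = g \<oplus> f"
  using grp[THEN conjunct2, THEN conjunct2, THEN conjunct2, THEN conjunct2, THEN conjunct1] by blast
lemma add_0: "f \<in> hom C A B \<Longrightarrow> czero C A B \<oplus> f = f"
  using grp[THEN conjunct2, THEN conjunct2, THEN conjunct2, THEN conjunct2, THEN conjunct2, THEN conjunct1] by blast
lemma add_neg: "f \<in> hom C A B \<Longrightarrow> f \<oplus> cneg C f = czero C A B"
  using grp[THEN conjunct2, THEN conjunct2, THEN conjunct2, THEN conjunct2, THEN conjunct2, THEN conjunct2] by blast
lemma dist_l: "f \<in> hom C A B \<Longrightarrow> g \<in> hom C A B \<Longrightarrow> h \<in> hom C B D \<Longrightarrow> h \<cdot> (f \<oplus> g) = (h \<cdot> f) \<oplus> (h \<cdot> g)"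
  using pre'[THEN conjunct2, THEN conjunct2, THEN conjunct1, rule_format] .
lemma dist_r: "f \<in> hom C A B \<Longrightarrow> g \<in> hom C B D \<Longrightarrow> h \<in> hom C B D \<Longrightarrow> (g \<oplus> h) \<cdot> f = (g \<cdot> f) \<oplus> (h \<cdot> f)"
  using pre'[THEN conjunct2, THEN conjunct2, THEN conjunct2, rule_format] .

lemma add_0r: "f \<in> hom C A B \<Longrightarrow> f \<oplus> czero C A B = f"
  by (metis add_0 add_comm hom_ob zero_hom)
lemma neg_add: "f \<in> hom C A B \<Longrightarrow> cneg C f \<oplus> f = czero C A B"
  by (metis add_comm add_neg neg_hom)
lemma add_cancel:
  assumes x: "x \<in> hom C A B" and y: "y \<in> hom C A B" and z: "z \<in> hom C A B" and e: "x \<oplus> y = x \<oplus> z"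
  shows "y = z"
proof -
  have "y = (cneg C x \<oplus> x) \<oplus> y" using add_0 neg_add x y by metis
  also have "\<dots> = cneg C x \<oplus> (x \<oplus> y)" using add_assoc neg_hom x y by metis
  also have "\<dots> = cneg C x \<oplus> (x \<oplus> z)" using e by simp
  also have "\<dots> = (cneg C x \<oplus> x) \<oplus> z" using add_assoc neg_hom x z by metis
  also have "\<dots> = z" using add_0 neg_add x z by metis
  finally show ?thesis .
qed
lemma idem_zero: "x \<in> hom C A B \<Longrightarrow> x \<oplus> x = x \<Longrightarrow> x = czero C A B"
  by (metis add_0r add_cancel hom_ob zero_hom)
lemma diff_zero:
  assumes f: "f \<in> hom C A B" and g: "g \<in> hom C A B" and e: "f \<oplus> cneg C g = czero C A B"
  shows "f = g"
proof -
  have "f = f \<oplus> (cneg C g \<oplus> g)" using add_0r neg_add f g by metis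
  also have "\<dots> = (f \<oplus> cneg C g) \<oplus> g" using add_assoc neg_hom f g by metis
  also have "\<dots> = g" using e add_0 g by simp
  finally show ?thesis .
qed
lemma comp_0r: "h \<in> hom C B D \<Longrightarrow> A \<in> Ob C \<Longrightarrow> h \<cdot> czero C A B = czero C A D"
proof -
  assume h: "h \<in> hom C B D" and A: "A \<in> Ob C"
  have z: "czero C A B \<in> hom C A B" using zero_hom A hom_ob h by blast
  have "czero C A B \<oplus> czero C A B = czero C A B" using add_0 z by blast
  hence "h \<cdot> czero C A B = (h \<cdot> czero C A B) \<oplus> (h \<cdot> czero C A B)"
    using dist_l z h by metis
  thus ?thesis using idem_zero comp_hom z h by metis
qed
lemma comp_0l: "f \<in> hom C A B \<Longrightarrow> D \<in> Ob C \<Longrightarrow> czero C B D \<cdot> f = czero C A D"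
proof -
  assume f: "f \<in> hom C A B" and D: "D \<in> Ob C"
  have z: "czero C B D \<in> hom C B D" using zero_hom D hom_ob f by blast
  have "czero C B D \<oplus> czero C B D = czero C B D" using add_0 z by blast
  hence "czero C B D \<cdot> f = (czero C B D \<cdot> f) \<oplus> (czero C B D \<cdot> f)"
    using dist_r z f by metis
  thus ?thesis using idem_zero comp_hom z f by metis
qed
lemma neg_comp:
  assumes f: "f \<in> hom C B D" and g: "g \<in> hom C A B"
  shows "cneg C f \<cdot> g = cneg C (f \<cdot> g)"
proof -
  have fg: "f \<cdot> g \<in> hom C A D" using comp_hom f g by blast
  have "(f \<cdot> g) \<oplus> (cneg C f \<cdot> g) = (f \<oplus> cneg C f) \<cdot> g" using dist_r f g neg_hom by metis
  also have "\<dots> = czero C A D" using add_neg f comp_0l g hom_ob by metis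
  also have "\<dots> = (f \<cdot> g) \<oplus> cneg C (f \<cdot> g)" using add_neg fg by metis
  finally show ?thesis using add_cancel fg comp_hom neg_hom f g by metis
qed

end


context abcat begin

lemma ex1_eqI: "\<exists>!x. P x \<Longrightarrow> P a \<Longrightarrow> P b \<Longrightarrow> a = b" by auto

lemma zero_ob: "zero_obj C Z \<Longrightarrow> Z \<in> Ob C" by (simp add: zero_obj_def)

lemma zero_from: assumes z: "zero_obj C Z" and f: "f \<in> hom C Z A" shows "f = czero C Z A"
proof -
  have A: "A \<in> Ob C" "Z \<in> Ob C" using hom_ob f by auto
  have "\<exists>!f. f \<in> hom C Z A" using z A(1) unfolding zero_obj_def by (simp add: Ball_def)
  then obtain x where "\<forall>y. y \<in> hom C Z A \<longrightarrow> y = x" by (elim ex1E) simp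
  thus ?thesis using f zero_hom[OF A(2) A(1)] by auto
qed
lemma zero_to: assumes z: "zero_obj C Z" and f: "f \<in> hom C A Z" shows "f = czero C A Z"
proof -
  have A: "A \<in> Ob C" "Z \<in> Ob C" using hom_ob f by auto
  have "\<exists>!f. f \<in> hom C A Z" using z A(1) unfolding zero_obj_def by (simp add: Ball_def)
  then obtain x where "\<forall>y. y \<in> hom C A Z \<longrightarrow> y = x" by (elim ex1E) simp
  thus ?thesis using f zero_hom[OF A(1) A(2)] by auto
qed

lemma zeroI: assumes Z: "Z \<in> Ob C" and e: "cid C Z = czero C Z Z" shows "zero_obj C Z"
  unfolding zero_obj_def
proof (intro conjI ballI)
  show "Z \<in> Ob C" by fact
  fix A assume A: "A \<in> Ob C"
  show "\<exists>!f. f \<in> hom C Z A"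
  proof (rule ex1I[of _ "czero C Z A"])
    show "czero C Z A \<in> hom C Z A" using zero_hom Z A by blast
    fix f assume f: "f \<in> hom C Z A"
    have "f = f \<cdot> cid C Z" using id_r f by simp
    also have "\<dots> = czero C Z A" using e comp_0r f Z by simp
    finally show "f = czero C Z A" .
  qed
  show "\<exists>!f. f \<in> hom C A Z"
  proof (rule ex1I[of _ "czero C A Z"])
    show "czero C A Z \<in> hom C A Z" using zero_hom Z A by blast
    fix f assume f: "f \<in> hom C A Z"
    have "f = cid C Z \<cdot> f" using id_l f by simp
    also have "\<dots> = czero C A Z" using e comp_0l f Z by simp
    finally show "f = czero C A Z" .
  qed
qed

lemma zero_id: "zero_obj C Z \<Longrightarrow> cid C Z = czero C Z Z"
  using zero_from id_hom zero_ob by blast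

lemma iso_refl: "X \<in> Ob C \<Longrightarrow> iso_obj C X X"
  unfolding iso_obj_def using id_hom id_l by blast
lemma iso_sym: "iso_obj C X Y \<Longrightarrow> iso_obj C Y X"
  unfolding iso_obj_def by blast
lemma iso_trans: assumes "iso_obj C X Y" "iso_obj C Y W" shows "iso_obj C X W"
proof -
  obtain f g where f: "f \<in> hom C X Y" "g \<in> hom C Y X" "g \<cdot> f = cid C X" "f \<cdot> g = cid C Y"
    using assms(1) unfolding iso_obj_def by blast
  obtain f' g' where f': "f' \<in> hom C Y W" "g' \<in> hom C W Y" "g' \<cdot> f' = cid C Y" "f' \<cdot> g' = cid C W"
    using assms(2) unfolding iso_obj_def by blast
  have 1: "(g \<cdot> g') \<cdot> (f' \<cdot> f) = cid C X"
  proof -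
    have "(g \<cdot> g') \<cdot> (f' \<cdot> f) = g \<cdot> (g' \<cdot> (f' \<cdot> f))" using assoc[OF comp_hom[OF f(1) f'(1)] f'(2) f(2)] by simp
    also have "\<dots> = g \<cdot> ((g' \<cdot> f') \<cdot> f)" by (simp add: assoc[OF f(1) f'(1) f'(2)])
    also have "\<dots> = cid C X" using f f' id_l by simp
    finally show ?thesis .
  qed
  have 2: "(f' \<cdot> f) \<cdot> (g \<cdot> g') = cid C W"
  proof -
    have "(f' \<cdot> f) \<cdot> (g \<cdot> g') = f' \<cdot> (f \<cdot> (g \<cdot> g'))" using assoc[OF comp_hom[OF f'(2) f(2)] f(1) f'(1)] by simp
    also have "\<dots> = f' \<cdot> ((f \<cdot> g) \<cdot> g')" by (simp add: assoc[OF f'(2) f(2) f(1)])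
    also have "\<dots> = cid C W" using f f' id_l by simp
    finally show ?thesis .
  qed
  show ?thesis unfolding iso_obj_def using 1 2 comp_hom f f' by blast
qed

lemma zero_iso: assumes "zero_obj C Z" "zero_obj C Z'" shows "iso_obj C Z Z'"
proof -
  have Z: "Z \<in> Ob C" "Z' \<in> Ob C" using assms zero_ob by auto
  have a: "czero C Z Z' \<in> hom C Z Z'" "czero C Z' Z \<in> hom C Z' Z" using zero_hom Z by auto
  have "czero C Z' Z \<cdot> czero C Z Z' = cid C Z"
    using zero_from[OF assms(1) comp_hom[OF a(1) a(2)]] zero_from[OF assms(1) id_hom[OF Z(1)]] by simp
  moreover have "czero C Z Z' \<cdot> czero C Z' Z = cid C Z'"
    using zero_from[OF assms(2) comp_hom[OF a(2) a(1)]] zero_from[OF assms(2) id_hom[OF Z(2)]] by simp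
  ultimately show ?thesis unfolding iso_obj_def using a by blast
qed

lemma iso_zero: assumes i: "iso_obj C X Z" and z: "zero_obj C Z" shows "zero_obj C X"
proof -
  obtain f g where f: "f \<in> hom C X Z" "g \<in> hom C Z X" "g \<cdot> f = cid C X"
    using i unfolding iso_obj_def by blast
  have X: "X \<in> Ob C" using hom_ob f by blast
  have "f = czero C X Z" using zero_to z f by blast
  hence "cid C X = czero C X X" using f comp_0r X by simp
  thus ?thesis using zeroI X by blast
qed

lemma kerD: assumes "is_kernel C k f"
  shows "k \<in> hom C (cdom C k) (cdom C f)" "f \<in> hom C (cdom C f) (ccod C f)"
    "f \<cdot> k = czero C (cdom C k) (ccod C f)"
  using assms unfolding is_kernel_def hom_def by auto
lemma kerU: assumes "is_kernel C k f" "g \<in> hom C T (cdom C f)" "f \<cdot> g = czero C T (ccod C f)"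
  shows "\<exists>!u. u \<in> hom C T (cdom C k) \<and> k \<cdot> u = g"
proof -
  have T: "T \<in> Ob C" using hom_ob assms(2) by blast
  have "\<forall>T\<in>Ob C. \<forall>g\<in>hom C T (cdom C f). f \<cdot> g = czero C T (ccod C f) \<longrightarrow>
        (\<exists>!u. u \<in> hom C T (cdom C k) \<and> k \<cdot> u = g)" using assms(1) unfolding is_kernel_def by (elim conjE)
  thus ?thesis using T assms(2,3) by blast
qed
lemma cokerD: assumes "is_cokernel C c f"
  shows "c \<in> hom C (ccod C f) (ccod C c)" "f \<in> hom C (cdom C f) (ccod C f)"
    "c \<cdot> f = czero C (cdom C f) (ccod C c)"
  using assms unfolding is_cokernel_def hom_def by auto
lemma cokerU: assumes "is_cokernel C c f" "g \<in> hom C (ccod C f) T" "g \<cdot> f = czero C (cdom C f) T"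
  shows "\<exists>!u. u \<in> hom C (ccod C c) T \<and> u \<cdot> c = g"
proof -
  have T: "T \<in> Ob C" using hom_ob assms(2) by blast
  have "\<forall>T\<in>Ob C. \<forall>g\<in>hom C (ccod C f) T. g \<cdot> f = czero C (cdom C f) T \<longrightarrow>
        (\<exists>!u. u \<in> hom C (ccod C c) T \<and> u \<cdot> c = g)" using assms(1) unfolding is_cokernel_def by (elim conjE)
  thus ?thesis using T assms(2,3) by blast
qed

lemma monoD: assumes "mono C k" "g \<in> hom C T (cdom C k)" "h \<in> hom C T (cdom C k)" "k \<cdot> g = k \<cdot> h"
  shows "g = h"
proof -
  have T: "T \<in> Ob C" using hom_ob assms(2) by blast
  have "\<forall>T\<in>Ob C. \<forall>g\<in>hom C T (cdom C k). \<forall>h\<in>hom C T (cdom C k). k \<cdot> g = k \<cdot> h \<longrightarrow> g = h"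
    using assms(1) unfolding mono_def by (elim conjE)
  thus ?thesis using T assms(2-4) by blast
qed
lemma epiD: assumes "epi C k" "g \<in> hom C (ccod C k) T" "h \<in> hom C (ccod C k) T" "g \<cdot> k = h \<cdot> k"
  shows "g = h"
proof -
  have T: "T \<in> Ob C" using hom_ob assms(2) by blast
  have "\<forall>T\<in>Ob C. \<forall>g\<in>hom C (ccod C k) T. \<forall>h\<in>hom C (ccod C k) T. g \<cdot> k = h \<cdot> k \<longrightarrow> g = h"
    using assms(1) unfolding epi_def by (elim conjE)
  thus ?thesis using T assms(2-4) by blast
qed

lemma ker_mono: assumes k: "is_kernel C k f" shows "mono C k"
  unfolding mono_def
proof (intro conjI ballI impI)
  show "k \<in> Ar C" using k unfolding is_kernel_def by blast
  fix T g h assume T: "T \<in> Ob C" and g: "g \<in> hom C T (cdom C k)" and h: "h \<in> hom C T (cdom C k)"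
    and e: "k \<cdot> g = k \<cdot> h"
  note kd = kerD[OF k]
  have kg: "k \<cdot> g \<in> hom C T (cdom C f)" using comp_hom g kd(1) by blast
  have "f \<cdot> (k \<cdot> g) = (f \<cdot> k) \<cdot> g" using assoc[OF g kd(1) kd(2)] by simp
  also have "\<dots> = czero C T (ccod C f)" using kd(3) comp_0l[OF g] hom_ob[OF kd(2)] by simp
  finally have "\<exists>!u. u \<in> hom C T (cdom C k) \<and> k \<cdot> u = k \<cdot> g" using kerU[OF k kg] by blast
  thus "g = h" by (rule ex1_eqI) (use g h e in auto)
qed

lemma coker_epi: assumes c: "is_cokernel C c f" shows "epi C c"
  unfolding epi_def
proof (intro conjI ballI impI)
  show "c \<in> Ar C" using c unfolding is_cokernel_def by blast
  fix T g h assume T: "T \<in> Ob C" and g: "g \<in> hom C (ccod C c) T" and h: "h \<in> hom C (ccod C c) T"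
    and e: "g \<cdot> c = h \<cdot> c"
  note cd = cokerD[OF c]
  have gc: "g \<cdot> c \<in> hom C (ccod C f) T" using comp_hom g cd(1) by blast
  have "(g \<cdot> c) \<cdot> f = g \<cdot> (c \<cdot> f)" using assoc[OF cd(2) cd(1) g] by simp
  also have "\<dots> = czero C (cdom C f) T" using cd(3) comp_0r[OF g] hom_ob[OF cd(2)] by simp
  finally have "\<exists>!u. u \<in> hom C (ccod C c) T \<and> u \<cdot> c = g \<cdot> c" using cokerU[OF c gc] by blast
  thus "g = h" by (rule ex1_eqI) (use g h e in auto)
qed

end


named_theorems cs

context abcat begin

lemma c_ob1[cs]: "f \<in> Ar C \<Longrightarrow> cdom C f \<in> Ob C" using ar_ob by blast
lemma c_ob2[cs]: "f \<in> Ar C \<Longrightarrow> ccod C f \<in> Ob C" using ar_ob by blast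
lemma c_comp: "f \<in> Ar C \<Longrightarrow> g \<in> Ar C \<Longrightarrow> ccod C f = cdom C g \<Longrightarrow> g \<cdot> f \<in> hom C (cdom C f) (ccod C g)"
  by (rule comp_hom) (auto simp: hom_def)
lemma c_comp_ar[cs]: "f \<in> Ar C \<Longrightarrow> g \<in> Ar C \<Longrightarrow> ccod C f = cdom C g \<Longrightarrow> g \<cdot> f \<in> Ar C"
  using c_comp homD by blast
lemma c_comp_dom[cs]: "f \<in> Ar C \<Longrightarrow> g \<in> Ar C \<Longrightarrow> ccod C f = cdom C g \<Longrightarrow> cdom C (g \<cdot> f) = cdom C f"
  using c_comp homD by blast
lemma c_comp_cod[cs]: "f \<in> Ar C \<Longrightarrow> g \<in> Ar C \<Longrightarrow> ccod C f = cdom C g \<Longrightarrow> ccod C (g \<cdot> f) = ccod C g"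
  using c_comp homD by blast
lemma c_assoc[cs]: "f \<in> Ar C \<Longrightarrow> g \<in> Ar C \<Longrightarrow> h \<in> Ar C \<Longrightarrow> ccod C f = cdom C g \<Longrightarrow> ccod C g = cdom C h
  \<Longrightarrow> (h \<cdot> g) \<cdot> f = h \<cdot> (g \<cdot> f)"
  by (rule sym, rule assoc) (auto simp: hom_def)
lemma c_id_ar[cs]: "X \<in> Ob C \<Longrightarrow> cid C X \<in> Ar C" using id_hom homD by blast
lemma c_id_dom[cs]: "X \<in> Ob C \<Longrightarrow> cdom C (cid C X) = X" using id_hom homD by blast
lemma c_id_cod[cs]: "X \<in> Ob C \<Longrightarrow> ccod C (cid C X) = X" using id_hom homD by blast
lemma c_id_l[cs]: "f \<in> Ar C \<Longrightarrow> ccod C f = X \<Longrightarrow> cid C X \<cdot> f = f" using id_l homI by blast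
lemma c_id_r[cs]: "f \<in> Ar C \<Longrightarrow> cdom C f = X \<Longrightarrow> f \<cdot> cid C X = f" using id_r homI by blast
lemma c_zero_ar[cs]: "X \<in> Ob C \<Longrightarrow> Y \<in> Ob C \<Longrightarrow> czero C X Y \<in> Ar C" using zero_hom homD by blast
lemma c_zero_dom[cs]: "X \<in> Ob C \<Longrightarrow> Y \<in> Ob C \<Longrightarrow> cdom C (czero C X Y) = X" using zero_hom homD by blast
lemma c_zero_cod[cs]: "X \<in> Ob C \<Longrightarrow> Y \<in> Ob C \<Longrightarrow> ccod C (czero C X Y) = Y" using zero_hom homD by blast
lemma c_zero_l[cs]: "f \<in> Ar C \<Longrightarrow> ccod C f = X \<Longrightarrow> Y \<in> Ob C \<Longrightarrow> czero C X Y \<cdot> f = czero C (cdom C f) Y"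
  using comp_0l homI by blast
lemma c_zero_r[cs]: "f \<in> Ar C \<Longrightarrow> cdom C f = Y \<Longrightarrow> X \<in> Ob C \<Longrightarrow> f \<cdot> czero C X Y = czero C X (ccod C f)"
  using comp_0r homI by blast

lemma kerD': assumes "is_kernel C k f"
  shows "k \<in> Ar C" "f \<in> Ar C" "ccod C k = cdom C f" "f \<cdot> k = czero C (cdom C k) (ccod C f)"
  using assms unfolding is_kernel_def by auto
lemma cokerD': assumes "is_cokernel C c f"
  shows "c \<in> Ar C" "f \<in> Ar C" "ccod C f = cdom C c" "c \<cdot> f = czero C (cdom C f) (ccod C c)"
  using assms unfolding is_cokernel_def by auto

lemma kerE: assumes k: "is_kernel C k f" and g: "g \<in> Ar C" "ccod C g = cdom C f"
  and e: "f \<cdot> g = czero C (cdom C g) (ccod C f)"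
  obtains u where "u \<in> Ar C" "cdom C u = cdom C g" "ccod C u = cdom C k" "k \<cdot> u = g"
proof -
  have "g \<in> hom C (cdom C g) (cdom C f)" using g by (simp add: hom_def)
  from kerU[OF k this e] show ?thesis using that by (auto simp: hom_def)
qed
lemma cokerE: assumes c: "is_cokernel C c f" and g: "g \<in> Ar C" "cdom C g = ccod C f"
  and e: "g \<cdot> f = czero C (cdom C f) (ccod C g)"
  obtains u where "u \<in> Ar C" "cdom C u = ccod C c" "ccod C u = ccod C g" "u \<cdot> c = g"
proof -
  have "g \<in> hom C (ccod C f) (ccod C g)" using g by (simp add: hom_def)
  from cokerU[OF c this e] show ?thesis using that by (auto simp: hom_def)
qed
lemma monoD': assumes "mono C k" "g \<in> Ar C" "h \<in> Ar C" "ccod C g = cdom C k" "ccod C h = cdom C k"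
  "cdom C g = cdom C h" "k \<cdot> g = k \<cdot> h" shows "g = h"
  using monoD[OF assms(1), of g "cdom C g" h] assms by (simp add: hom_def)
lemma epiD': assumes "epi C k" "g \<in> Ar C" "h \<in> Ar C" "cdom C g = ccod C k" "cdom C h = ccod C k"
  "ccod C g = ccod C h" "g \<cdot> k = h \<cdot> k" shows "g = h"
  using epiD[OF assms(1), of g "ccod C g" h] assms by (simp add: hom_def)

lemma KC: assumes e: "is_cokernel C e g" and k: "is_kernel C k e" shows "is_cokernel C e k"
proof -
  note ed = cokerD'[OF e] and kd = kerD'[OF k]
  have univ: "\<forall>T\<in>Ob C. \<forall>h\<in>hom C (ccod C k) T. h \<cdot> k = czero C (cdom C k) T \<longrightarrow>
       (\<exists>!u. u \<in> hom C (ccod C e) T \<and> u \<cdot> e = h)"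
  proof (intro ballI impI)
    fix T h assume T: "T \<in> Ob C" and h: "h \<in> hom C (ccod C k) T" and hk: "h \<cdot> k = czero C (cdom C k) T"
    obtain v where v: "v \<in> Ar C" "cdom C v = cdom C g" "ccod C v = cdom C k" "k \<cdot> v = g"
      using kerE[OF k] ed by (metis c_ob1 c_ob2)
    have "h \<cdot> g = (h \<cdot> k) \<cdot> v" using v kd h by (simp add: hom_def cs)
    also have "\<dots> = czero C (cdom C g) T" using hk v T by (simp add: cs)
    finally have hg: "h \<cdot> g = czero C (cdom C g) T" .
    have h': "h \<in> hom C (ccod C g) T" using h kd ed by simp
    show "\<exists>!u. u \<in> hom C (ccod C e) T \<and> u \<cdot> e = h" using cokerU[OF e h' hg] .
  qed
  show ?thesis unfolding is_cokernel_def using ed kd univ by auto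
qed

lemma coker_iso: assumes c: "is_cokernel C c f" and c': "is_cokernel C c' f"
  shows "iso_obj C (ccod C c) (ccod C c')"
proof -
  note cd = cokerD'[OF c] and cd' = cokerD'[OF c']
  obtain u where u: "u \<in> Ar C" "cdom C u = ccod C c" "ccod C u = ccod C c'" "u \<cdot> c = c'"
    using cokerE[OF c] cd' by metis
  obtain v where v: "v \<in> Ar C" "cdom C v = ccod C c'" "ccod C v = ccod C c" "v \<cdot> c' = c"
    using cokerE[OF c'] cd by metis
  have "(v \<cdot> u) \<cdot> c = cid C (ccod C c) \<cdot> c" using u v cd by (simp add: cs)
  hence vu: "v \<cdot> u = cid C (ccod C c)"
    using epiD'[OF coker_epi[OF c]] u v cd by (simp add: cs)
  have "(u \<cdot> v) \<cdot> c' = cid C (ccod C c') \<cdot> c'" using u v cd' by (simp add: cs)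
  hence uv: "u \<cdot> v = cid C (ccod C c')"
    using epiD'[OF coker_epi[OF c']] u v cd' by (simp add: cs)
  show ?thesis unfolding iso_obj_def using u v uv vu by (auto simp: hom_def)
qed

lemma epi_test: assumes r: "r \<in> Ar C"
  and t: "\<And>T h. h \<in> Ar C \<Longrightarrow> cdom C h = ccod C r \<Longrightarrow> ccod C h = T \<Longrightarrow> h \<cdot> r = czero C (cdom C r) T \<Longrightarrow> h = czero C (ccod C r) T"
  shows "epi C r"
  unfolding epi_def
proof (intro conjI ballI impI)
  show "r \<in> Ar C" by fact
  fix T g h assume T: "T \<in> Ob C" and g: "g \<in> hom C (ccod C r) T" and h: "h \<in> hom C (ccod C r) T"
    and e: "g \<cdot> r = h \<cdot> r"
  have rr: "r \<in> hom C (cdom C r) (ccod C r)" using r by (simp add: hom_def)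
  define d where "d = g \<oplus> cneg C h"
  have d: "d \<in> hom C (ccod C r) T" unfolding d_def using add_hom neg_hom g h by blast
  have "d \<cdot> r = (g \<cdot> r) \<oplus> (cneg C h \<cdot> r)" unfolding d_def using dist_r[OF rr g neg_hom[OF h]] .
  also have "\<dots> = (g \<cdot> r) \<oplus> cneg C (g \<cdot> r)" using neg_comp[OF h rr] e by simp
  also have "\<dots> = czero C (cdom C r) T" using add_neg comp_hom[OF rr g] by blast
  finally have "d = czero C (ccod C r) T" using t d by (simp add: hom_def)
  thus "g = h" using diff_zero g h unfolding d_def by blast
qed

lemma coker_from_zero: assumes z: "zero_obj C Z" and f: "f \<in> Ar C" "cdom C f = Z"
  shows "is_cokernel C (cid C (ccod C f)) f"
proof -
  have fz: "f = czero C Z (ccod C f)" using zero_from[OF z] f by (simp add: hom_def)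
  show ?thesis unfolding is_cokernel_def
  proof (intro conjI ballI impI)
    show "cid C (ccod C f) \<cdot> f = czero C (cdom C f) (ccod C (cid C (ccod C f)))"
      using f fz by (simp add: cs)
    fix T g assume g: "T \<in> Ob C" "g \<in> hom C (ccod C f) T"
    show "\<exists>!u. u \<in> hom C (ccod C (cid C (ccod C f))) T \<and> u \<cdot> cid C (ccod C f) = g"
    proof (rule ex1I[of _ g])
      show "g \<in> hom C (ccod C (cid C (ccod C f))) T \<and> g \<cdot> cid C (ccod C f) = g"
        using f g by (simp add: hom_def cs)
      fix u assume "u \<in> hom C (ccod C (cid C (ccod C f))) T \<and> u \<cdot> cid C (ccod C f) = g"
      thus "u = g" using f by (elim conjE) (simp add: hom_def cs)
    qed
  qed (use f in \<open>auto simp: cs\<close>)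
qed

lemma ker_of_id: assumes z: "zero_obj C Z" and B: "B \<in> Ob C"
  shows "is_kernel C (czero C Z B) (cid C B)"
proof -
  have Z: "Z \<in> Ob C" using z zero_ob by blast
  show ?thesis unfolding is_kernel_def
  proof (intro conjI ballI impI)
    fix T g assume T: "T \<in> Ob C" and g: "g \<in> hom C T (cdom C (cid C B))"
      and e: "cid C B \<cdot> g = czero C T (ccod C (cid C B))"
    have g0: "g = czero C T B" using e g B by (simp add: hom_def cs)
    show "\<exists>!u. u \<in> hom C T (cdom C (czero C Z B)) \<and> czero C Z B \<cdot> u = g"
    proof (rule ex1I[of _ "czero C T Z"])
      show "czero C T Z \<in> hom C T (cdom C (czero C Z B)) \<and> czero C Z B \<cdot> czero C T Z = g"
        using g0 T Z B by (simp add: hom_def cs)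
      fix u assume "u \<in> hom C T (cdom C (czero C Z B)) \<and> czero C Z B \<cdot> u = g"
      thus "u = czero C T Z" using zero_to[OF z, of u T] Z B by (simp add: hom_def cs)
    qed
  qed (use Z B in \<open>auto simp: cs\<close>)
qed

end


context abcat begin

lemma ab_ker: "f \<in> Ar C \<Longrightarrow> \<exists>k. is_kernel C k f" using abel unfolding abelian_def by blast
lemma ab_coker: "f \<in> Ar C \<Longrightarrow> \<exists>k. is_cokernel C k f" using abel unfolding abelian_def by blast
lemma ab_epi: "epi C f \<Longrightarrow> \<exists>g. is_cokernel C f g" using abel unfolding abelian_def by blast
lemma ab_bip: "A \<in> Ob C \<Longrightarrow> B \<in> Ob C \<Longrightarrow> \<exists>P i1 i2 p1 p2. is_biproduct C A B P i1 i2 p1 p2"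
  using abel unfolding abelian_def by blast

lemma neg_zero: "A \<in> Ob C \<Longrightarrow> B \<in> Ob C \<Longrightarrow> cneg C (czero C A B) = czero C A B"
  by (metis add_0 add_neg neg_hom zero_hom)

lemma epi_comp: assumes p: "epi C p" and q: "epi C q" and c: "ccod C p = cdom C q"
  shows "epi C (q \<cdot> p)"
proof -
  have pa: "p \<in> Ar C" and qa: "q \<in> Ar C" using p q unfolding epi_def by auto
  show ?thesis unfolding epi_def
  proof (intro conjI ballI impI)
    show "q \<cdot> p \<in> Ar C" using pa qa c by (simp add: cs)
    fix T g h assume T: "T \<in> Ob C" and g: "g \<in> hom C (ccod C (q \<cdot> p)) T" and h: "h \<in> hom C (ccod C (q \<cdot> p)) T"
      and e: "g \<cdot> (q \<cdot> p) = h \<cdot> (q \<cdot> p)"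
    have g': "g \<in> Ar C" "cdom C g = ccod C q" "ccod C g = T" using g pa qa c by (auto simp: hom_def cs)
    have h': "h \<in> Ar C" "cdom C h = ccod C q" "ccod C h = T" using h pa qa c by (auto simp: hom_def cs)
    have "(g \<cdot> q) \<cdot> p = (h \<cdot> q) \<cdot> p" using e g' h' pa qa c by (simp add: cs)
    hence "g \<cdot> q = h \<cdot> q" using epiD'[OF p, of "g \<cdot> q" "h \<cdot> q"] g' h' pa qa c by (simp add: cs)
    thus "g = h" using epiD'[OF q, of g h] g' h' by simp
  qed
qed

end

locale excat = abcat C for C :: "('o,'m) acat" +
  fixes E :: "'o set"
  assumes ex: "exact_cat C E"
begin

lemma E_ob: "X \<in> E \<Longrightarrow> X \<in> Ob C" using ex unfolding exact_cat_def by blast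
lemma E_zero: "\<exists>Z\<in>E. zero_obj C Z" using ex unfolding exact_cat_def by blast
lemma E_ext: "is_kernel C i p \<Longrightarrow> is_cokernel C p i \<Longrightarrow> cdom C i \<in> E \<Longrightarrow> ccod C p \<in> E \<Longrightarrow> ccod C i \<in> E"
  using ex unfolding exact_cat_def by blast
lemma E_bip: "A \<in> E \<Longrightarrow> B \<in> E \<Longrightarrow> is_biproduct C A B P i1 i2 p1 p2 \<Longrightarrow> P \<in> E"
  using ex unfolding exact_cat_def by blast

lemma confD: assumes "conflation C E i p"
  shows "is_kernel C i p" "is_cokernel C p i" "cdom C i \<in> E" "ccod C i \<in> E" "ccod C p \<in> E"
    "i \<in> Ar C" "p \<in> Ar C" "cdom C p = ccod C i" "p \<cdot> i = czero C (cdom C i) (ccod C p)"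
  using assms unfolding conflation_def is_kernel_def by auto

lemma conf_zero_iso: assumes c: "conflation C E i p" and z: "zero_obj C (ccod C p)"
  shows "iso_mor C i"
proof -
  note cd = confD[OF c]
  have B: "ccod C i \<in> Ob C" using cd by (simp add: cs)
  have "p \<in> hom C (ccod C i) (ccod C p)" using cd by (simp add: hom_def)
  from zero_to[OF z this] have p0: "p = czero C (ccod C i) (ccod C p)" .
  have "p \<cdot> cid C (ccod C i) = czero C (cdom C (cid C (ccod C i))) (ccod C p)"
    using cd B p0 by (simp add: cs)
  then obtain u where u: "u \<in> Ar C" "cdom C u = ccod C i" "ccod C u = cdom C i" "i \<cdot> u = cid C (ccod C i)"
    using kerE[OF cd(1), of "cid C (ccod C i)"] cd B by (simp add: cs) metis
  have "i \<cdot> (u \<cdot> i) = i \<cdot> cid C (cdom C i)" using u cd B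
    by (metis c_assoc c_id_l c_id_r)
  hence ui: "u \<cdot> i = cid C (cdom C i)"
    using monoD'[OF ker_mono[OF cd(1)], of "u \<cdot> i" "cid C (cdom C i)"] u cd by (simp add: cs)
  show ?thesis unfolding iso_mor_def using u ui cd by (auto simp: hom_def)
qed

lemma iso_mor_obj: "iso_mor C i \<Longrightarrow> iso_obj C (cdom C i) (ccod C i)"
  unfolding iso_mor_def iso_obj_def by (auto simp: hom_def)

end


context excat begin

lemma conf_iso:
  assumes c: "conflation C E i p" and f: "f \<in> Ar C" "cdom C f = ccod C i"
    and g: "g \<in> Ar C" "cdom C g = ccod C f" "ccod C g = ccod C i"
    and gf: "g \<cdot> f = cid C (ccod C i)" and fg: "f \<cdot> g = cid C (ccod C f)"
    and E': "ccod C f \<in> E"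
  shows "conflation C E (f \<cdot> i) (p \<cdot> g)"
proof -
  note cd = confD[OF c]
  have B: "ccod C i \<in> Ob C" "ccod C f \<in> Ob C" using cd f by (auto simp: cs)
  have gfi: "g \<cdot> (f \<cdot> x) = x" if "x \<in> Ar C" "ccod C x = ccod C i" for x
  proof -
    have "g \<cdot> (f \<cdot> x) = (g \<cdot> f) \<cdot> x" using that f g by (simp add: cs)
    thus ?thesis using gf that by (simp add: cs)
  qed
  have fgx: "f \<cdot> (g \<cdot> x) = x" if "x \<in> Ar C" "ccod C x = ccod C f" for x
  proof -
    have "f \<cdot> (g \<cdot> x) = (f \<cdot> g) \<cdot> x" using that f g by (simp add: cs)
    thus ?thesis using fg that by (simp add: cs)
  qed
  have xgf: "x \<cdot> (g \<cdot> f) = x" if "x \<in> Ar C" "cdom C x = ccod C i" for x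
    using gf that by (simp add: cs)
  have zz: "(p \<cdot> g) \<cdot> (f \<cdot> i) = czero C (cdom C i) (ccod C p)"
  proof -
    have "(p \<cdot> g) \<cdot> (f \<cdot> i) = p \<cdot> (g \<cdot> (f \<cdot> i))" using cd f g by (simp add: cs)
    also have "\<dots> = p \<cdot> i" using gfi cd by simp
    finally show ?thesis using cd by simp
  qed
  have ar: "f \<cdot> i \<in> Ar C" "p \<cdot> g \<in> Ar C" "cdom C (f \<cdot> i) = cdom C i" "ccod C (f \<cdot> i) = ccod C f"
    "cdom C (p \<cdot> g) = ccod C f" "ccod C (p \<cdot> g) = ccod C p" using cd f g by (auto simp: cs)
  have K: "is_kernel C (f \<cdot> i) (p \<cdot> g)"
    unfolding is_kernel_def
  proof (intro conjI ballI impI)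
    fix T h assume T: "T \<in> Ob C" and h: "h \<in> hom C T (cdom C (p \<cdot> g))"
      and e: "(p \<cdot> g) \<cdot> h = czero C T (ccod C (p \<cdot> g))"
    have h': "h \<in> Ar C" "cdom C h = T" "ccod C h = ccod C f" using h ar by (auto simp: hom_def)
    have "p \<cdot> (g \<cdot> h) = czero C (cdom C (g \<cdot> h)) (ccod C p)" using e h' cd f g by (simp add: cs)
    then obtain u where u: "u \<in> Ar C" "cdom C u = T" "ccod C u = cdom C i" "i \<cdot> u = g \<cdot> h"
      using kerE[OF cd(1), of "g \<cdot> h"] h' cd f g by (simp add: cs) metis
    show "\<exists>!u. u \<in> hom C T (cdom C (f \<cdot> i)) \<and> (f \<cdot> i) \<cdot> u = h"
    proof (rule ex1I[of _ u])
      have "(f \<cdot> i) \<cdot> u = f \<cdot> (g \<cdot> h)" using u cd f g h' by (simp add: cs)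
      also have "\<dots> = h" using fgx h' by simp
      finally show "u \<in> hom C T (cdom C (f \<cdot> i)) \<and> (f \<cdot> i) \<cdot> u = h" using u ar by (simp add: hom_def)
      fix v assume v: "v \<in> hom C T (cdom C (f \<cdot> i)) \<and> (f \<cdot> i) \<cdot> v = h"
      have v': "v \<in> Ar C" "cdom C v = T" "ccod C v = cdom C i" using v ar by (auto simp: hom_def)
      have "i \<cdot> v = g \<cdot> ((f \<cdot> i) \<cdot> v)" using v' cd f g gfi by (simp add: cs)
      also have "\<dots> = i \<cdot> u" using v u by simp
      finally show "v = u" using monoD'[OF ker_mono[OF cd(1)], of v u] u v' by simp
    qed
  qed (use ar zz in auto)
  have CK: "is_cokernel C (p \<cdot> g) (f \<cdot> i)"
    unfolding is_cokernel_def
  proof (intro conjI ballI impI)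
    fix T h assume T: "T \<in> Ob C" and h: "h \<in> hom C (ccod C (f \<cdot> i)) T"
      and e: "h \<cdot> (f \<cdot> i) = czero C (cdom C (f \<cdot> i)) T"
    have h': "h \<in> Ar C" "cdom C h = ccod C f" "ccod C h = T" using h ar by (auto simp: hom_def)
    have "(h \<cdot> f) \<cdot> i = czero C (cdom C i) (ccod C (h \<cdot> f))" using e h' cd f g by (simp add: cs)
    then obtain u where u: "u \<in> Ar C" "cdom C u = ccod C p" "ccod C u = T" "u \<cdot> p = h \<cdot> f"
      using cokerE[OF cd(2), of "h \<cdot> f"] h' cd f g by (simp add: cs) metis
    show "\<exists>!u. u \<in> hom C (ccod C (p \<cdot> g)) T \<and> u \<cdot> (p \<cdot> g) = h"
    proof (rule ex1I[of _ u])
      have "u \<cdot> (p \<cdot> g) = (u \<cdot> p) \<cdot> g" using u(1-3) cd f g h' by (simp add: cs)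
      also have "\<dots> = (h \<cdot> f) \<cdot> g" using u by simp
      also have "\<dots> = h \<cdot> (f \<cdot> g)" using cd f g h' by (simp add: cs)
      also have "\<dots> = h" using fg h' by (simp add: cs)
      finally show "u \<in> hom C (ccod C (p \<cdot> g)) T \<and> u \<cdot> (p \<cdot> g) = h" using u ar by (simp add: hom_def)
      fix v assume v: "v \<in> hom C (ccod C (p \<cdot> g)) T \<and> v \<cdot> (p \<cdot> g) = h"
      have v': "v \<in> Ar C" "cdom C v = ccod C p" "ccod C v = T" using v ar by (auto simp: hom_def)
      have "v \<cdot> p = (v \<cdot> (p \<cdot> g)) \<cdot> f" using v' cd f g xgf by (simp add: cs)
      also have "\<dots> = u \<cdot> p" using v u by simp
      finally show "v = u" using epiD'[OF coker_epi[OF cd(2)], of v u] u v' by simp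
    qed
  qed (use ar zz in auto)
  show ?thesis unfolding conflation_def using K CK ar cd E' by simp
qed

lemma triv_conf: assumes z: "zero_obj C Z" "Z \<in> E" and B: "B \<in> E"
  shows "conflation C E (czero C Z B) (cid C B)"
proof -
  have Ob: "Z \<in> Ob C" "B \<in> Ob C" using z B E_ob by auto
  have "is_cokernel C (cid C (ccod C (czero C Z B))) (czero C Z B)"
    using coker_from_zero[OF z(1), of "czero C Z B"] Ob by (simp add: cs)
  thus ?thesis unfolding conflation_def using ker_of_id[OF z(1) Ob(2)] Ob z B by (simp add: cs)
qed

lemma conf_fac_iso: "conflation C E i p \<Longrightarrow> conflation C E i p' \<Longrightarrow> iso_obj C (ccod C p) (ccod C p')"
  using coker_iso confD by blast

lemma fac_iso: "series_factor C E fs k Z \<Longrightarrow> series_factor C E fs k Z' \<Longrightarrow> iso_obj C Z Z'"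
  unfolding series_factor_def using conf_fac_iso by blast

lemma bip_conf: assumes b: "is_biproduct C A B P i1 i2 p1 p2" and A: "A \<in> E" and B: "B \<in> E"
  shows "conflation C E i1 p2"
proof -
  have P: "P \<in> E" using E_bip[OF A B b] .
  have bb: "i1 \<in> hom C A P" "i2 \<in> hom C B P" "p1 \<in> hom C P A" "p2 \<in> hom C P B"
    "p1 \<cdot> i1 = cid C A" "p2 \<cdot> i2 = cid C B" "p1 \<cdot> i2 = czero C B A" "p2 \<cdot> i1 = czero C A B"
    "(i1 \<cdot> p1) \<oplus> (i2 \<cdot> p2) = cid C P" using b unfolding is_biproduct_def by auto
  have Ob: "A \<in> Ob C" "B \<in> Ob C" "P \<in> Ob C" using A B P E_ob by auto
  have a: "i1 \<in> Ar C" "cdom C i1 = A" "ccod C i1 = P" "i2 \<in> Ar C" "cdom C i2 = B" "ccod C i2 = P"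
    "p1 \<in> Ar C" "cdom C p1 = P" "ccod C p1 = A" "p2 \<in> Ar C" "cdom C p2 = P" "ccod C p2 = B"
    using bb by (auto simp: hom_def)
  have ip: "i1 \<cdot> p1 \<in> hom C P P" "i2 \<cdot> p2 \<in> hom C P P" using bb comp_hom by auto
  have K: "is_kernel C i1 p2"
    unfolding is_kernel_def
  proof (intro conjI ballI impI)
    fix T t assume T: "T \<in> Ob C" and t: "t \<in> hom C T (cdom C p2)" and e: "p2 \<cdot> t = czero C T (ccod C p2)"
    have t': "t \<in> Ar C" "cdom C t = T" "ccod C t = P" using t a by (auto simp: hom_def)
    have "t = cid C P \<cdot> t" using t' by (simp add: cs)
    also have "\<dots> = ((i1 \<cdot> p1) \<cdot> t) \<oplus> ((i2 \<cdot> p2) \<cdot> t)" using bb(9) dist_r[OF t[unfolded a] ip] by simp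
    also have "\<dots> = (i1 \<cdot> (p1 \<cdot> t)) \<oplus> czero C T P" using a t' e Ob T by (simp add: cs)
    also have "\<dots> = i1 \<cdot> (p1 \<cdot> t)" using add_0r[of "i1 \<cdot> (p1 \<cdot> t)" T P] a t' by (simp add: hom_def cs)
    finally have tt: "t = i1 \<cdot> (p1 \<cdot> t)" .
    show "\<exists>!u. u \<in> hom C T (cdom C i1) \<and> i1 \<cdot> u = t"
    proof (rule ex1I[of _ "p1 \<cdot> t"])
      show "p1 \<cdot> t \<in> hom C T (cdom C i1) \<and> i1 \<cdot> (p1 \<cdot> t) = t" using tt a t' by (simp add: hom_def cs)
      fix u assume u: "u \<in> hom C T (cdom C i1) \<and> i1 \<cdot> u = t"
      hence "p1 \<cdot> (i1 \<cdot> u) = p1 \<cdot> t" by simp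
      moreover have "p1 \<cdot> (i1 \<cdot> u) = (p1 \<cdot> i1) \<cdot> u" using u a by (simp add: hom_def cs)
      moreover have "(p1 \<cdot> i1) \<cdot> u = u" using u a bb(5) Ob by (simp add: hom_def cs)
      ultimately show "u = p1 \<cdot> t" by simp
    qed
  qed (use a bb Ob in auto)
  have CK: "is_cokernel C p2 i1"
    unfolding is_cokernel_def
  proof (intro conjI ballI impI)
    fix T g assume T: "T \<in> Ob C" and g: "g \<in> hom C (ccod C i1) T" and e: "g \<cdot> i1 = czero C (cdom C i1) T"
    have g': "g \<in> Ar C" "cdom C g = P" "ccod C g = T" using g a by (auto simp: hom_def)
    have "g = g \<cdot> cid C P" using g' by (simp add: cs)
    also have "\<dots> = (g \<cdot> (i1 \<cdot> p1)) \<oplus> (g \<cdot> (i2 \<cdot> p2))" using bb(9) dist_l[OF ip, of g T] g' by (simp add: hom_def)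
    also have "\<dots> = czero C P T \<oplus> ((g \<cdot> i2) \<cdot> p2)"
    proof -
      have "g \<cdot> (i1 \<cdot> p1) = (g \<cdot> i1) \<cdot> p1" using a g' by (simp add: cs)
      also have "\<dots> = czero C A T \<cdot> p1" using e a by simp
      also have "\<dots> = czero C P T" using a T by (simp add: cs)
      finally have x1: "g \<cdot> (i1 \<cdot> p1) = czero C P T" .
      have x2: "g \<cdot> (i2 \<cdot> p2) = (g \<cdot> i2) \<cdot> p2" using a g' by (simp add: cs)
      show ?thesis using x1 x2 by simp
    qed
    also have "\<dots> = (g \<cdot> i2) \<cdot> p2" using add_0[of "(g \<cdot> i2) \<cdot> p2" P T] a g' by (simp add: hom_def cs)
    finally have gg: "g = (g \<cdot> i2) \<cdot> p2" .
    show "\<exists>!u. u \<in> hom C (ccod C p2) T \<and> u \<cdot> p2 = g"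
    proof (rule ex1I[of _ "g \<cdot> i2"])
      show "g \<cdot> i2 \<in> hom C (ccod C p2) T \<and> (g \<cdot> i2) \<cdot> p2 = g" using gg a g' by (simp add: hom_def cs)
      fix u assume u: "u \<in> hom C (ccod C p2) T \<and> u \<cdot> p2 = g"
      have "(u \<cdot> p2) \<cdot> i2 = u" using conjunct1[OF u] a bb(6) Ob by (simp add: hom_def cs)
      thus "u = g \<cdot> i2" using u by simp
    qed
  qed (use a bb Ob in auto)
  show ?thesis unfolding conflation_def using K CK A B P a by simp
qed

end


context excat begin

lemma PB:
  assumes c1: "conflation C E i p" and c2: "conflation C E j q" and cc: "ccod C j = ccod C p"
  obtains s r k where "conflation C E s r" "conflation C E k (q \<cdot> p)"
    "cdom C s = cdom C i" "ccod C r = cdom C j" "ccod C s = cdom C k" "ccod C k = ccod C i"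
proof -
  note d1 = confD[OF c1] and d2 = confD[OF c2]
  have qp: "q \<cdot> p \<in> Ar C" "cdom C (q \<cdot> p) = ccod C i" "ccod C (q \<cdot> p) = ccod C q"
    using d1 d2 cc by (auto simp: cs)
  obtain k where k: "is_kernel C k (q \<cdot> p)" using ab_ker qp by blast
  note kd = kerD'[OF k]
  have kk: "ccod C k = ccod C i" "q \<cdot> (p \<cdot> k) = czero C (cdom C k) (ccod C q)"
    using kd qp d1 d2 cc by (auto simp: cs)
  have epi_qp: "epi C (q \<cdot> p)"
    using epi_comp[OF coker_epi[OF d1(2)] coker_epi[OF d2(2)]] d1 d2 cc by simp
  obtain g0 where "is_cokernel C (q \<cdot> p) g0" using ab_epi[OF epi_qp] by blast
  from KC[OF this k] have qpk: "is_cokernel C (q \<cdot> p) k" .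
  have "q \<cdot> (p \<cdot> k) = czero C (cdom C (p \<cdot> k)) (ccod C q)" using kk kd d1 by (simp add: cs)
  then obtain r where r: "r \<in> Ar C" "cdom C r = cdom C k" "ccod C r = cdom C j" "j \<cdot> r = p \<cdot> k"
    using kerE[OF d2(1), of "p \<cdot> k"] kd kk d1 d2 cc by (simp add: cs) metis
  have "(q \<cdot> p) \<cdot> i = czero C (cdom C i) (ccod C (q \<cdot> p))"
  proof -
    have "(q \<cdot> p) \<cdot> i = q \<cdot> (p \<cdot> i)" using d1 d2 cc by (simp add: cs)
    also have "\<dots> = czero C (cdom C i) (ccod C q)" using d1 d2 cc by (simp add: cs)
    finally show ?thesis using qp by simp
  qed
  then obtain s where s: "s \<in> Ar C" "cdom C s = cdom C i" "ccod C s = cdom C k" "k \<cdot> s = i"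
    using kerE[OF k, of i] d1 qp by (simp add: cs) metis
  have monoj: "mono C j" using ker_mono[OF d2(1)] .
  have monok: "mono C k" using ker_mono[OF k] .
  have monoi: "mono C i" using ker_mono[OF d1(1)] .
  have Ob: "cdom C i \<in> Ob C" "ccod C i \<in> Ob C" "cdom C j \<in> Ob C" "ccod C p \<in> Ob C" "cdom C k \<in> Ob C"
    using d1 d2 kd by (auto simp: cs)
  have rs: "r \<cdot> s = czero C (cdom C s) (ccod C r)"
  proof -
    have "j \<cdot> (r \<cdot> s) = (j \<cdot> r) \<cdot> s" using r(1-3) s(1-3) d2 by (simp add: cs)
    also have "\<dots> = (p \<cdot> k) \<cdot> s" using r by simp
    also have "\<dots> = p \<cdot> i" using s kd kk d1 by (simp add: cs)
    also have "\<dots> = j \<cdot> czero C (cdom C s) (ccod C r)" using d1 d2 s(1-3) r(1-3) cc Ob by (simp add: cs)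
    finally show ?thesis using monoD'[OF monoj, of "r \<cdot> s" "czero C (cdom C s) (ccod C r)"] r s Ob
      by (simp add: cs)
  qed
  have Ksr: "is_kernel C s r"
    unfolding is_kernel_def
  proof (intro conjI ballI impI)
    fix T t assume T: "T \<in> Ob C" and t: "t \<in> hom C T (cdom C r)" and e: "r \<cdot> t = czero C T (ccod C r)"
    have t': "t \<in> Ar C" "cdom C t = T" "ccod C t = cdom C k" using t r by (auto simp: hom_def)
    have "p \<cdot> (k \<cdot> t) = (j \<cdot> r) \<cdot> t" using t' r kd kk d1 d2 by (simp add: cs)
    also have "\<dots> = j \<cdot> (r \<cdot> t)" using t' r(1-3) d2 by (simp add: cs)
    also have "\<dots> = czero C (cdom C (k \<cdot> t)) (ccod C p)" using e t' r d2 cc kd kk T by (simp add: cs)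
    finally obtain u where u: "u \<in> Ar C" "cdom C u = T" "ccod C u = cdom C i" "i \<cdot> u = k \<cdot> t"
      using kerE[OF d1(1), of "k \<cdot> t"] t' kd kk d1 by (simp add: cs) metis
    show "\<exists>!u. u \<in> hom C T (cdom C s) \<and> s \<cdot> u = t"
    proof (rule ex1I[of _ u])
      have "k \<cdot> (s \<cdot> u) = (k \<cdot> s) \<cdot> u" using u(1-3) s(1-3) kd by (simp add: cs)
      also have "\<dots> = k \<cdot> t" using s u by simp
      finally have "s \<cdot> u = t" using monoD'[OF monok, of "s \<cdot> u" t] u s t' by (simp add: cs)
      thus "u \<in> hom C T (cdom C s) \<and> s \<cdot> u = t" using u s by (simp add: hom_def)
      fix v assume v: "v \<in> hom C T (cdom C s) \<and> s \<cdot> v = t"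
      have v': "v \<in> Ar C" "cdom C v = T" "ccod C v = cdom C i" using v s by (auto simp: hom_def)
      have "i \<cdot> v = (k \<cdot> s) \<cdot> v" using s by simp
      also have "\<dots> = k \<cdot> (s \<cdot> v)" using v' s(1-3) kd by (simp add: cs)
      also have "\<dots> = i \<cdot> u" using v u by simp
      finally show "v = u" using monoD'[OF monoi, of v u] u v' by simp
    qed
  qed (use s r rs in auto)
  obtain P i1 i2 p1 p2 where bip: "is_biproduct C (ccod C i) (cdom C j) P i1 i2 p1 p2"
    using ab_bip Ob by blast
  have bb: "i1 \<in> hom C (ccod C i) P" "i2 \<in> hom C (cdom C j) P" "p1 \<in> hom C P (ccod C i)" "p2 \<in> hom C P (cdom C j)"
    "p1 \<cdot> i1 = cid C (ccod C i)" "p2 \<cdot> i2 = cid C (cdom C j)" "p1 \<cdot> i2 = czero C (cdom C j) (ccod C i)"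
    "p2 \<cdot> i1 = czero C (ccod C i) (cdom C j)" using bip unfolding is_biproduct_def by auto
  have a: "i1 \<in> Ar C" "cdom C i1 = ccod C i" "ccod C i1 = P" "i2 \<in> Ar C" "cdom C i2 = cdom C j" "ccod C i2 = P"
    "p1 \<in> Ar C" "cdom C p1 = P" "ccod C p1 = ccod C i" "p2 \<in> Ar C" "cdom C p2 = P" "ccod C p2 = cdom C j"
    using bb by (auto simp: hom_def)
  have PO: "P \<in> Ob C" using a by (auto simp: cs)
  define \<phi> where "\<phi> = (p \<cdot> p1) \<oplus> cneg C (j \<cdot> p2)"
  have pp1: "p \<cdot> p1 \<in> hom C P (ccod C p)" and jp2: "j \<cdot> p2 \<in> hom C P (ccod C p)"
    using a d1 d2 cc by (auto simp: hom_def cs)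
  have phi: "\<phi> \<in> hom C P (ccod C p)" unfolding \<phi>_def using add_hom[OF pp1 neg_hom[OF jp2]] .
  have phi': "\<phi> \<in> Ar C" "cdom C \<phi> = P" "ccod C \<phi> = ccod C p" using phi by (auto simp: hom_def)
  have i1h: "i1 \<in> hom C (ccod C i) P" by fact
  have phi_i1: "\<phi> \<cdot> i1 = p"
  proof -
    have "\<phi> \<cdot> i1 = ((p \<cdot> p1) \<cdot> i1) \<oplus> (cneg C (j \<cdot> p2) \<cdot> i1)"
      unfolding \<phi>_def using dist_r[OF i1h pp1 neg_hom[OF jp2]] .
    also have "\<dots> = ((p \<cdot> p1) \<cdot> i1) \<oplus> cneg C ((j \<cdot> p2) \<cdot> i1)" using neg_comp[OF jp2 i1h] by simp
    also have "(p \<cdot> p1) \<cdot> i1 = p" using a bb d1 by (simp add: cs)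
    also have "(j \<cdot> p2) \<cdot> i1 = czero C (ccod C i) (ccod C p)" using a bb d1 d2 cc Ob by (simp add: cs)
    also have "p \<oplus> cneg C (czero C (ccod C i) (ccod C p)) = p"
      using neg_zero Ob add_0r[of p "ccod C i" "ccod C p"] d1 by (simp add: hom_def)
    finally show ?thesis .
  qed
  have epi_p: "epi C p" using coker_epi[OF d1(2)] .
  have epi_phi: "epi C \<phi>"
    unfolding epi_def
  proof (intro conjI ballI impI)
    show "\<phi> \<in> Ar C" by (rule phi'(1))
    fix T g h assume T: "T \<in> Ob C" and g: "g \<in> hom C (ccod C \<phi>) T" and h: "h \<in> hom C (ccod C \<phi>) T"
      and e: "g \<cdot> \<phi> = h \<cdot> \<phi>"
    have g': "g \<in> Ar C" "cdom C g = ccod C p" "ccod C g = T" using g phi' by (auto simp: hom_def)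
    have h': "h \<in> Ar C" "cdom C h = ccod C p" "ccod C h = T" using h phi' by (auto simp: hom_def)
    have "g \<cdot> p = (g \<cdot> \<phi>) \<cdot> i1" using phi_i1 g' phi' a by (simp add: cs)
    also have "\<dots> = (h \<cdot> \<phi>) \<cdot> i1" using e by simp
    also have "\<dots> = h \<cdot> p" using phi_i1 h' phi' a by (simp add: cs)
    finally show "g = h" using epiD'[OF epi_p, of g h] g' h' d1 by simp
  qed
  obtain m where m: "is_kernel C m \<phi>" using ab_ker phi' by blast
  note md = kerD'[OF m]
  obtain g1 where "is_cokernel C \<phi> g1" using ab_epi[OF epi_phi] by blast
  from KC[OF this m] have phim: "is_cokernel C \<phi> m" .
  have m': "m \<in> Ar C" "ccod C m = P" "cdom C m \<in> Ob C" using md phi' by (auto simp: cs)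
  have epi_r: "epi C r"
  proof (rule epi_test[OF r(1)])
    fix T h assume h: "h \<in> Ar C" "cdom C h = ccod C r" "ccod C h = T" and hr: "h \<cdot> r = czero C (cdom C r) T"
    have TO: "T \<in> Ob C" using h by (auto simp: cs)
    have mh: "m \<in> hom C (cdom C m) P" using m' by (simp add: hom_def)
    have "czero C (cdom C m) (ccod C p) = \<phi> \<cdot> m" using md phi' by simp
    also have "\<dots> = ((p \<cdot> p1) \<cdot> m) \<oplus> (cneg C (j \<cdot> p2) \<cdot> m)"
      unfolding \<phi>_def using dist_r[OF mh pp1 neg_hom[OF jp2]] .
    also have "\<dots> = ((p \<cdot> p1) \<cdot> m) \<oplus> cneg C ((j \<cdot> p2) \<cdot> m)" using neg_comp[OF jp2 mh] by simp
    finally have "((p \<cdot> p1) \<cdot> m) \<oplus> cneg C ((j \<cdot> p2) \<cdot> m) = czero C (cdom C m) (ccod C p)" by simp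
    hence eq: "(p \<cdot> p1) \<cdot> m = (j \<cdot> p2) \<cdot> m"
      using diff_zero[of "(p \<cdot> p1) \<cdot> m" "cdom C m" "ccod C p" "(j \<cdot> p2) \<cdot> m"] comp_hom[OF mh pp1] comp_hom[OF mh jp2]
      by simp
    have eq': "p \<cdot> (p1 \<cdot> m) = j \<cdot> (p2 \<cdot> m)" using eq a m' d1 d2 cc by (simp add: cs)
    have "(q \<cdot> p) \<cdot> (p1 \<cdot> m) = q \<cdot> (j \<cdot> (p2 \<cdot> m))" using eq' a m' d1 d2 cc by (simp add: cs)
    also have "\<dots> = (q \<cdot> j) \<cdot> (p2 \<cdot> m)" using a m' d1 d2(1-8) cc by (simp add: cs)
    also have "\<dots> = czero C (cdom C (p1 \<cdot> m)) (ccod C (q \<cdot> p))" using a m' d1 d2 cc qp by (simp add: cs)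
    finally obtain v where v: "v \<in> Ar C" "cdom C v = cdom C m" "ccod C v = cdom C k" "k \<cdot> v = p1 \<cdot> m"
      using kerE[OF k, of "p1 \<cdot> m"] a m' qp by (simp add: cs) metis
    have "j \<cdot> (r \<cdot> v) = (j \<cdot> r) \<cdot> v" using r(1-3) v(1-3) d2 by (simp add: cs)
    also have "\<dots> = (p \<cdot> k) \<cdot> v" using r by simp
    also have "\<dots> = p \<cdot> (k \<cdot> v)" using v kd kk d1 by (simp add: cs)
    also have "\<dots> = j \<cdot> (p2 \<cdot> m)" using v eq' by simp
    finally have rv: "r \<cdot> v = p2 \<cdot> m" using monoD'[OF monoj, of "r \<cdot> v" "p2 \<cdot> m"] r v a m' by (simp add: cs)
    have "(h \<cdot> p2) \<cdot> m = h \<cdot> (p2 \<cdot> m)" using h a m' r(1-3) by (simp add: cs)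
    also have "\<dots> = h \<cdot> (r \<cdot> v)" using rv by simp
    also have "\<dots> = (h \<cdot> r) \<cdot> v" using h r(1-3) v(1-3) by (simp add: cs)
    also have "\<dots> = czero C (cdom C m) (ccod C (h \<cdot> p2))" using hr h r v a TO by (simp add: cs)
    finally obtain w where w: "w \<in> Ar C" "cdom C w = ccod C \<phi>" "ccod C w = ccod C (h \<cdot> p2)" "w \<cdot> \<phi> = h \<cdot> p2"
      using cokerE[OF phim, of "h \<cdot> p2"] h a m' r by (simp add: cs) metis
    have w': "ccod C w = T" "cdom C w = ccod C p" using w h a r phi' by (auto simp: cs)
    have "w \<cdot> p = (w \<cdot> \<phi>) \<cdot> i1" using phi_i1 w(1-3) phi' a by (simp add: cs)
    also have "\<dots> = h \<cdot> (p2 \<cdot> i1)" using w h a r by (simp add: cs)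
    also have "\<dots> = czero C (cdom C p) T" using bb h a r d1 Ob by (simp add: cs)
    also have "\<dots> = czero C (ccod C p) T \<cdot> p" using d1 TO by (simp add: cs)
    finally have w0: "w = czero C (ccod C p) T" using epiD'[OF epi_p, of w "czero C (ccod C p) T"] w w' d1 TO
      by (simp add: cs)
    have "h = h \<cdot> (p2 \<cdot> i2)" using h bb a r by (simp add: cs)
    also have "\<dots> = (w \<cdot> \<phi>) \<cdot> i2" using w h a r by (simp add: cs)
    also have "\<dots> = czero C (ccod C r) T" using w0 phi' a r d1 TO by (simp add: cs)
    finally show "h = czero C (ccod C r) T" .
  qed
  obtain g2 where "is_cokernel C r g2" using ab_epi[OF epi_r] by blast
  from KC[OF this Ksr] have CKrs: "is_cokernel C r s" .
  have YE: "ccod C s \<in> E" using E_ext[OF Ksr CKrs] s d1 r d2 by simp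
  have conf1: "conflation C E s r" unfolding conflation_def using Ksr CKrs YE s d1 r d2 by simp
  have conf2: "conflation C E k (q \<cdot> p)" unfolding conflation_def using k qpk YE s kk d1 d2 qp by simp
  show ?thesis using that[OF conf1 conf2] s r kk by simp
qed

end


definition rel_series :: "('o,'m) acat \<Rightarrow> 'o set \<Rightarrow> 'o \<Rightarrow> 'o \<Rightarrow> nat \<Rightarrow> (nat \<Rightarrow> 'o) \<Rightarrow> (nat \<Rightarrow> 'm) \<Rightarrow> bool" where
  "rel_series C E A B m Ys hs \<longleftrightarrow> Ys 0 = A \<and> Ys m = B \<and>
     (\<forall>k\<in>{1..m}. inflation C E (hs k) \<and> cdom C (hs k) = Ys (k - 1) \<and> ccod C (hs k) = Ys k)"

definition props :: "('o,'m) acat \<Rightarrow> 'o set \<Rightarrow> ('o \<Rightarrow> bool) \<Rightarrow> (nat \<Rightarrow> 'm) \<Rightarrow> nat \<Rightarrow> bool" where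
  "props C E P fs n \<longleftrightarrow> (\<forall>k\<in>{1..n}. \<forall>Z. series_factor C E fs k Z \<longrightarrow> P Z)"

lemma subobj_rel: "subobj_series C E X n Xs fs \<longleftrightarrow> zero_obj C (Xs 0) \<and> rel_series C E (Xs 0) X n Xs fs"
  unfolding subobj_series_def rel_series_def by auto

lemma proper_props: "proper_series C E X n Xs fs \<longleftrightarrow> subobj_series C E X n Xs fs \<and> props C E (\<lambda>Z. \<not> zero_obj C Z) fs n"
  unfolding proper_series_def props_def by auto

lemma comp_props: "composition_series C E X n Xs fs \<longleftrightarrow> subobj_series C E X n Xs fs \<and> props C E (simple_obj C E) fs n"
  unfolding composition_series_def props_def by auto

lemma rel_concat0:
  assumes a: "rel_series C E X0 A n Xs fs" and b: "rel_series C E A B m Ys hs"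
    and Zs: "Zs = (\<lambda>k. if k \<le> n then Xs k else Ys (k - n))"
    and gs: "gs = (\<lambda>k. if k \<le> n then fs k else hs (k - n))"
  shows "rel_series C E X0 B (n + m) Zs gs"
proof -
  have "Zs 0 = X0" using a Zs by (simp add: rel_series_def)
  moreover have "Zs (n + m) = B" using a b Zs by (auto simp: rel_series_def)
  moreover have "inflation C E (gs k) \<and> cdom C (gs k) = Zs (k - 1) \<and> ccod C (gs k) = Zs k"
    if k: "k \<in> {1..n + m}" for k
  proof (cases "k \<le> n")
    case True thus ?thesis using a k Zs gs by (auto simp: rel_series_def)
  next
    case False
    hence kk: "k - n \<in> {1..m}" using k by auto
    have "Ys 0 = Xs n" using a b by (simp add: rel_series_def)
    moreover have "k - 1 - n = k - n - 1" by simp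
    moreover have k1: "k - 1 \<le> n \<Longrightarrow> k - 1 = n" using False by auto
    ultimately show ?thesis using b kk False Zs gs by (cases "k - 1 \<le> n") (auto simp: rel_series_def)
  qed
  ultimately show ?thesis unfolding rel_series_def by blast
qed

lemma rel_concat:
  assumes a: "rel_series C E X0 A n Xs fs" and b: "rel_series C E A B m Ys hs"
  shows "rel_series C E X0 B (n + m) (\<lambda>k. if k \<le> n then Xs k else Ys (k - n)) (\<lambda>k. if k \<le> n then fs k else hs (k - n))"
  using rel_concat0[OF a b] by blast

lemma factor_concat:
  "series_factor C E (\<lambda>k. if k \<le> n then fs k else hs (k - n)) k Z \<longleftrightarrow>
    (if k \<le> n then series_factor C E fs k Z else series_factor C E hs (k - n) Z)"
  unfolding series_factor_def by auto

lemma rel_factor_ex: "rel_series C E A B m Ys hs \<Longrightarrow> k \<in> {1..m} \<Longrightarrow> \<exists>Z. series_factor C E hs k Z"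
  unfolding rel_series_def series_factor_def inflation_def by blast

context excat begin

lemma factor_E: "series_factor C E fs k Z \<Longrightarrow> Z \<in> E"
  unfolding series_factor_def using confD by blast

lemma iso_mor_comp_inv:
  assumes i: "i \<in> Ar C" and f: "f \<in> Ar C" "cdom C f = ccod C i"
    and g: "g \<in> Ar C" "cdom C g = ccod C f" "ccod C g = ccod C i"
    and gf: "g \<cdot> f = cid C (ccod C i)" and fg: "f \<cdot> g = cid C (ccod C f)"
    and im: "iso_mor C (f \<cdot> i)"
  shows "iso_mor C i"
proof -
  have fi: "f \<cdot> i \<in> Ar C" "cdom C (f \<cdot> i) = cdom C i" "ccod C (f \<cdot> i) = ccod C f" using i f by (auto simp: cs)
  obtain h where h: "h \<in> hom C (ccod C f) (cdom C i)" "h \<cdot> (f \<cdot> i) = cid C (cdom C i)" "(f \<cdot> i) \<cdot> h = cid C (ccod C f)"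
    using im fi unfolding iso_mor_def by auto
  have h': "h \<in> Ar C" "cdom C h = ccod C f" "ccod C h = cdom C i" using h by (auto simp: hom_def)
  have 1: "(h \<cdot> f) \<cdot> i = cid C (cdom C i)" using h h' f i by (simp add: cs)
  have "i \<cdot> (h \<cdot> f) = g \<cdot> (((f \<cdot> i) \<cdot> h) \<cdot> f)"
  proof -
    have "g \<cdot> (((f \<cdot> i) \<cdot> h) \<cdot> f) = (g \<cdot> f) \<cdot> (i \<cdot> (h \<cdot> f))" using i f g h' by (simp add: cs)
    thus ?thesis using gf i h' f by (simp add: cs)
  qed
  also have "\<dots> = cid C (ccod C i)" using h(3) gf f g by (simp add: cs)
  finally have 2: "i \<cdot> (h \<cdot> f) = cid C (ccod C i)" .
  have hf: "h \<cdot> f \<in> hom C (ccod C i) (cdom C i)" using h' f i by (simp add: hom_def cs)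
  show ?thesis unfolding iso_mor_def using 1 2 i hf by blast
qed

lemma simple_iso: assumes S: "simple_obj C E S" and Z: "Z \<in> E" and iso: "iso_obj C Z S"
  shows "simple_obj C E Z"
proof -
  have SE: "S \<in> E" and nz: "\<not> zero_obj C S"
    and sp: "\<And>i. inflation C E i \<Longrightarrow> ccod C i = S \<Longrightarrow> zero_obj C (cdom C i) \<or> iso_mor C i"
    using S unfolding simple_obj_def by auto
  obtain f g where fg: "f \<in> hom C Z S" "g \<in> hom C S Z" "g \<cdot> f = cid C Z" "f \<cdot> g = cid C S"
    using iso unfolding iso_obj_def by blast
  have f': "f \<in> Ar C" "cdom C f = Z" "ccod C f = S" "g \<in> Ar C" "cdom C g = S" "ccod C g = Z"
    using fg by (auto simp: hom_def)
  have "\<not> zero_obj C Z" using nz iso_zero iso_sym iso by blast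
  moreover have "zero_obj C (cdom C i) \<or> iso_mor C i" if inf: "inflation C E i" and ci: "ccod C i = Z" for i
  proof -
    obtain p where c: "conflation C E i p" using inf unfolding inflation_def by blast
    have c2: "conflation C E (f \<cdot> i) (p \<cdot> g)"
      using conf_iso[OF c, of f g] f' fg ci SE by simp
    have "inflation C E (f \<cdot> i)" using c2 unfolding inflation_def by blast
    moreover have "ccod C (f \<cdot> i) = S" "cdom C (f \<cdot> i) = cdom C i" using f' ci confD[OF c] by (auto simp: cs)
    ultimately have "zero_obj C (cdom C i) \<or> iso_mor C (f \<cdot> i)" using sp by metis
    thus ?thesis using iso_mor_comp_inv[of i f g] confD[OF c] f' fg ci by auto
  qed
  ultimately show ?thesis unfolding simple_obj_def using Z by blast
qed

lemma len1:
  assumes z: "zero_obj C Z" "Z \<in> E" and B: "B \<in> E"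
  shows "subobj_series C E B 1 (\<lambda>k. if k = 0 then Z else B) (\<lambda>_. czero C Z B)"
    and "\<And>k W. series_factor C E (\<lambda>_. czero C Z B) k W \<Longrightarrow> iso_obj C W B"
proof -
  have c: "conflation C E (czero C Z B) (cid C B)" using triv_conf z B by blast
  have Ob: "Z \<in> Ob C" "B \<in> Ob C" using z B E_ob by auto
  show "subobj_series C E B 1 (\<lambda>k. if k = 0 then Z else B) (\<lambda>_. czero C Z B)"
    unfolding subobj_series_def inflation_def using c z Ob by (auto simp: cs)
  fix k W assume "series_factor C E (\<lambda>_. czero C Z B) k W"
  then obtain p where "conflation C E (czero C Z B) p" "ccod C p = W" unfolding series_factor_def by blast
  thus "iso_obj C W B" using conf_fac_iso[OF _ c] Ob by (auto simp: cs)
qed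

end


context excat begin

lemma SP:
  "conflation C E i p \<Longrightarrow> zero_obj C (Cs 0) \<Longrightarrow> rel_series C E (Cs 0) (ccod C p) (Suc m) Cs gs \<Longrightarrow>
   \<exists>Ys hs. rel_series C E (cdom C i) (ccod C i) (Suc m) Ys hs \<and>
     (\<forall>k\<in>{1..Suc m}. \<forall>Z Z'. series_factor C E gs k Z \<longrightarrow> series_factor C E hs k Z' \<longrightarrow> iso_obj C Z' Z)"
proof (induction m arbitrary: i p)
  case 0
  note c = "0.prems"(1) and z = "0.prems"(2) and rel = "0.prems"(3)
  define Ys where "Ys = (\<lambda>k::nat. if k = 0 then cdom C i else ccod C i)"
  have r: "rel_series C E (cdom C i) (ccod C i) (Suc 0) Ys (\<lambda>_. i)"
    unfolding rel_series_def Ys_def inflation_def using c by auto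
  have g1: "inflation C E (gs 1)" "cdom C (gs 1) = Cs 0" "ccod C (gs 1) = ccod C p"
    using rel unfolding rel_series_def by auto
  have g1a: "gs 1 \<in> Ar C" using g1(1) unfolding inflation_def using confD by blast
  have ck: "is_cokernel C (cid C (ccod C p)) (gs 1)" using coker_from_zero[OF z g1a g1(2)] g1 by simp
  have Ob: "ccod C p \<in> Ob C" using confD[OF c] by (simp add: cs)
  have "iso_obj C Z' Z" if Z: "series_factor C E gs 1 Z" and Z': "series_factor C E (\<lambda>_. i) 1 Z'" for Z Z'
  proof -
    obtain p1 where p1: "conflation C E (gs 1) p1" "ccod C p1 = Z" using Z unfolding series_factor_def by blast
    obtain p2 where p2: "conflation C E i p2" "ccod C p2 = Z'" using Z' unfolding series_factor_def by blast
    have "iso_obj C Z (ccod C p)" using coker_iso[OF confD(2)[OF p1(1)] ck] p1 Ob by (simp add: cs)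
    moreover have "iso_obj C Z' (ccod C p)" using conf_fac_iso[OF p2(1) c] p2 by simp
    ultimately show ?thesis using iso_trans iso_sym by blast
  qed
  thus ?case using r by (intro exI[of _ Ys] exI[of _ "\<lambda>_. i"]) auto
next
  case (Suc m)
  note c = "Suc.prems"(1) and z = "Suc.prems"(2) and rel = "Suc.prems"(3)
  define j where "j = gs (Suc (Suc m))"
  have jj: "inflation C E j" "cdom C j = Cs (Suc m)" "ccod C j = ccod C p"
    using rel unfolding rel_series_def j_def by auto
  obtain q where q: "conflation C E j q" using jj unfolding inflation_def by blast
  obtain s r k where srk: "conflation C E s r" "conflation C E k (q \<cdot> p)"
    "cdom C s = cdom C i" "ccod C r = cdom C j" "ccod C s = cdom C k" "ccod C k = ccod C i"
    using PB[OF c q jj(3)] by blast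
  have rel': "rel_series C E (Cs 0) (ccod C r) (Suc m) Cs gs"
    using rel srk jj unfolding rel_series_def by auto
  obtain Ys hs where IH: "rel_series C E (cdom C s) (ccod C s) (Suc m) Ys hs"
    "\<forall>k\<in>{1..Suc m}. \<forall>Z Z'. series_factor C E gs k Z \<longrightarrow> series_factor C E hs k Z' \<longrightarrow> iso_obj C Z' Z"
    using Suc.IH[OF srk(1) z rel'] by blast
  define Ys' where "Ys' = Ys(Suc (Suc m) := ccod C i)"
  define hs' where "hs' = hs(Suc (Suc m) := k)"
  have rr: "rel_series C E (cdom C i) (ccod C i) (Suc (Suc m)) Ys' hs'"
  proof -
    have 1: "Ys' 0 = cdom C i" using IH srk unfolding Ys'_def rel_series_def by simp
    have 2: "Ys' (Suc (Suc m)) = ccod C i" unfolding Ys'_def by simp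
    have 3: "inflation C E (hs' x) \<and> cdom C (hs' x) = Ys' (x - 1) \<and> ccod C (hs' x) = Ys' x"
      if x: "x \<in> {1..Suc (Suc m)}" for x
    proof (cases "x = Suc (Suc m)")
      case True
      thus ?thesis using srk IH unfolding hs'_def Ys'_def rel_series_def inflation_def by auto
    next
      case False
      hence "x \<in> {1..Suc m}" using x by auto
      thus ?thesis using False IH unfolding hs'_def Ys'_def rel_series_def by auto
    qed
    show ?thesis unfolding rel_series_def using 1 2 3 by blast
  qed
  have "iso_obj C Z' Z" if x: "x \<in> {1..Suc (Suc m)}" and Z: "series_factor C E gs x Z"
    and Z': "series_factor C E hs' x Z'" for x Z Z'
  proof (cases "x = Suc (Suc m)")
    case True
    obtain p1 where p1: "conflation C E j p1" "ccod C p1 = Z" using Z True unfolding series_factor_def j_def by blast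
    obtain p2 where p2: "conflation C E k p2" "ccod C p2 = Z'" using Z' True unfolding series_factor_def hs'_def by auto
    have "iso_obj C Z (ccod C q)" using conf_fac_iso[OF p1(1) q] p1 by simp
    moreover have "iso_obj C Z' (ccod C (q \<cdot> p))" using conf_fac_iso[OF p2(1) srk(2)] p2 by simp
    moreover have "ccod C (q \<cdot> p) = ccod C q" using confD[OF c] confD[OF q] jj by (simp add: cs)
    ultimately show ?thesis using iso_trans iso_sym by metis
  next
    case False
    hence "x \<in> {1..Suc m}" using x by auto
    moreover have "series_factor C E hs x Z'" using Z' False unfolding series_factor_def hs'_def by auto
    ultimately show ?thesis using IH(2) Z by blast
  qed
  thus ?case using rr by blast
qed

definition iso_inv :: "('o \<Rightarrow> bool) \<Rightarrow> bool" where
  "iso_inv P \<longleftrightarrow> (\<forall>Z Z'. Z' \<in> E \<longrightarrow> iso_obj C Z' Z \<longrightarrow> P Z \<longrightarrow> P Z')"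

lemma concat_conf:
  assumes a: "rel_series C E X0 (cdom C i) n Xs fs" and c: "conflation C E i p"
    and z: "zero_obj C (Cs 0)" and b: "rel_series C E (Cs 0) (ccod C p) m Cs gs" and m: "m \<ge> 1"
  shows "\<exists>Zs ks. rel_series C E X0 (ccod C i) (n + m) Zs ks \<and> (\<forall>k. k \<le> n \<longrightarrow> ks k = fs k) \<and>
     (\<forall>j\<in>{1..m}. \<forall>Z Z'. series_factor C E gs j Z \<longrightarrow> series_factor C E ks (n + j) Z' \<longrightarrow> iso_obj C Z' Z)"
proof -
  obtain m' where m': "m = Suc m'" using m by (cases m) auto
  obtain Ys hs where Y: "rel_series C E (cdom C i) (ccod C i) m Ys hs"
    "\<forall>k\<in>{1..m}. \<forall>Z Z'. series_factor C E gs k Z \<longrightarrow> series_factor C E hs k Z' \<longrightarrow> iso_obj C Z' Z"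
    using SP[OF c z b[unfolded m']] m' by blast
  have r: "rel_series C E X0 (ccod C i) (n + m) (\<lambda>k. if k \<le> n then Xs k else Ys (k - n)) (\<lambda>k. if k \<le> n then fs k else hs (k - n))"
    using rel_concat[OF a Y(1)] .
  show ?thesis
    apply (rule exI, rule exI, rule conjI[OF r])
    using Y(2) by (auto simp: factor_concat)
qed

lemma props_concat:
  assumes P: "iso_inv P" and pf: "props C E P fs n" and pg: "props C E P gs m"
    and b: "rel_series C E Y0 Y m Cs gs"
    and ks1: "\<forall>k. k \<le> n \<longrightarrow> ks k = fs k"
    and ks2: "\<forall>j\<in>{1..m}. \<forall>Z Z'. series_factor C E gs j Z \<longrightarrow> series_factor C E ks (n + j) Z' \<longrightarrow> iso_obj C Z' Z"
  shows "props C E P ks (n + m)"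
  unfolding props_def
proof (intro ballI allI impI)
  fix k Z' assume k: "k \<in> {1..n + m}" and Z': "series_factor C E ks k Z'"
  show "P Z'"
  proof (cases "k \<le> n")
    case True
    hence "series_factor C E fs k Z'" using Z' ks1 unfolding series_factor_def by auto
    thus ?thesis using pf True k unfolding props_def by auto
  next
    case False
    define j where "j = k - n"
    have j: "j \<in> {1..m}" "k = n + j" using False k unfolding j_def by auto
    obtain Z where Z: "series_factor C E gs j Z" using rel_factor_ex[OF b j(1)] by blast
    have "P Z" using pg Z j unfolding props_def by auto
    moreover have "iso_obj C Z' Z" using ks2 Z Z' j by auto
    moreover have "Z' \<in> E" using factor_E Z' by blast
    ultimately show ?thesis using P unfolding iso_inv_def by blast
  qed
qed

lemma iso_inv_nz: "iso_inv (\<lambda>Z. \<not> zero_obj C Z)"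
  unfolding iso_inv_def using iso_zero iso_sym by blast
lemma iso_inv_simple: "iso_inv (simple_obj C E)"
  unfolding iso_inv_def using simple_iso by blast

end


context excat begin

lemma glue:
  assumes a: "subobj_series C E (cdom C i) n As fa" and c: "conflation C E i p"
    and b: "subobj_series C E (ccod C p) m Cs gs" and m: "m \<ge> 1"
    and P: "iso_inv P" and pa: "props C E P fa n" and pb: "props C E P gs m"
  shows "\<exists>Xs fs. subobj_series C E (ccod C i) (n + m) Xs fs \<and> props C E P fs (n + m)"
proof -
  have a': "zero_obj C (As 0)" "rel_series C E (As 0) (cdom C i) n As fa" using a unfolding subobj_rel by auto
  have b': "zero_obj C (Cs 0)" "rel_series C E (Cs 0) (ccod C p) m Cs gs" using b unfolding subobj_rel by auto
  obtain Zs ks where Z: "rel_series C E (As 0) (ccod C i) (n + m) Zs ks" "\<forall>k. k \<le> n \<longrightarrow> ks k = fa k"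
    "\<forall>j\<in>{1..m}. \<forall>Z Z'. series_factor C E gs j Z \<longrightarrow> series_factor C E ks (n + j) Z' \<longrightarrow> iso_obj C Z' Z"
    using concat_conf[OF a'(2) c b'(1) b'(2) m] by blast
  have "Zs 0 = As 0" using Z(1) unfolding rel_series_def by simp
  hence "subobj_series C E (ccod C i) (n + m) Zs ks" using Z(1) a'(1) unfolding subobj_rel by simp
  moreover have "props C E P ks (n + m)" using props_concat[OF P pa pb b'(2) Z(2) Z(3)] .
  ultimately show ?thesis by blast
qed

lemma zero_series: "zero_obj C B \<Longrightarrow> composition_series C E B 0 (\<lambda>_. B) fs"
  unfolding composition_series_def subobj_series_def by simp

lemma len1_props:
  assumes z: "zero_obj C Z" "Z \<in> E" and B: "B \<in> E" and P: "iso_inv P" and PB: "P B"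
  shows "subobj_series C E B 1 (\<lambda>k. if k = 0 then Z else B) (\<lambda>_. czero C Z B)"
    "props C E P (\<lambda>_. czero C Z B) 1"
proof -
  show "subobj_series C E B 1 (\<lambda>k. if k = 0 then Z else B) (\<lambda>_. czero C Z B)" using len1[OF z B] by blast
  show "props C E P (\<lambda>_. czero C Z B) 1"
    unfolding props_def using len1(2)[OF z B] P PB factor_E unfolding iso_inv_def by blast
qed

lemma EX_aux:
  "B \<in> E \<Longrightarrow> (\<forall>n Xs fs. proper_series C E B n Xs fs \<longrightarrow> n \<le> N) \<Longrightarrow> \<exists>n Xs fs. composition_series C E B n Xs fs"
proof (induction N arbitrary: B)
  case 0
  obtain Z where Z: "Z \<in> E" "zero_obj C Z" using E_zero by blast
  show ?case
  proof (cases "zero_obj C B")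
    case True thus ?thesis using zero_series by blast
  next
    case False
    have "proper_series C E B 1 (\<lambda>k. if k = 0 then Z else B) (\<lambda>_. czero C Z B)"
      using len1_props[OF Z(2,1) "0.prems"(1) iso_inv_nz] False by (simp add: proper_props)
    thus ?thesis using "0.prems"(2) by fastforce
  qed
next
  case (Suc N)
  note BE = "Suc.prems"(1) and bd = "Suc.prems"(2)
  obtain Z where Z: "Z \<in> E" "zero_obj C Z" using E_zero by blast
  show ?case
  proof (cases "zero_obj C B")
    case True thus ?thesis using zero_series by blast
  next
    case nzB: False
    show ?thesis
    proof (cases "simple_obj C E B")
      case True
      have "composition_series C E B 1 (\<lambda>k. if k = 0 then Z else B) (\<lambda>_. czero C Z B)"
        using len1_props[OF Z(2,1) BE iso_inv_simple True] by (simp add: comp_props)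
      thus ?thesis by blast
    next
      case False
      then obtain i where i: "inflation C E i" "ccod C i = B" "\<not> zero_obj C (cdom C i)" "\<not> iso_mor C i"
        using BE nzB unfolding simple_obj_def by blast
      obtain p where c: "conflation C E i p" using i unfolding inflation_def by blast
      note cd = confD[OF c]
      have nzC: "\<not> zero_obj C (ccod C p)" using conf_zero_iso[OF c] i by blast
      have bA: "\<forall>n Xs fs. proper_series C E (cdom C i) n Xs fs \<longrightarrow> n \<le> N"
      proof (intro allI impI)
        fix n Xs fs assume pr: "proper_series C E (cdom C i) n Xs fs"
        have pr': "subobj_series C E (cdom C i) n Xs fs" "props C E (\<lambda>Z. \<not> zero_obj C Z) fs n"
          using pr unfolding proper_props by auto
        obtain Xs' fs' where "subobj_series C E (ccod C i) (n + 1) Xs' fs'" "props C E (\<lambda>Z. \<not> zero_obj C Z) fs' (n + 1)"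
          using glue[OF pr'(1) c len1_props(1)[OF Z(2,1) cd(5) iso_inv_nz nzC] _ iso_inv_nz pr'(2)
              len1_props(2)[OF Z(2,1) cd(5) iso_inv_nz nzC]] by auto
        hence "proper_series C E B (n + 1) Xs' fs'" using i unfolding proper_props by simp
        hence "n + 1 \<le> Suc N" using bd by blast
        thus "n \<le> N" by simp
      qed
      have bC: "\<forall>m Xs fs. proper_series C E (ccod C p) m Xs fs \<longrightarrow> m \<le> N"
      proof (intro allI impI)
        fix m Xs fs assume pr: "proper_series C E (ccod C p) m Xs fs"
        have pr': "subobj_series C E (ccod C p) m Xs fs" "props C E (\<lambda>Z. \<not> zero_obj C Z) fs m"
          using pr unfolding proper_props by auto
        have m1: "m \<ge> 1"
        proof (rule ccontr)
          assume "\<not> m \<ge> 1" hence "m = 0" by simp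
          hence "zero_obj C (ccod C p)" using pr unfolding proper_series_def subobj_series_def by auto
          thus False using nzC by blast
        qed
        obtain Xs' fs' where "subobj_series C E (ccod C i) (1 + m) Xs' fs'" "props C E (\<lambda>Z. \<not> zero_obj C Z) fs' (1 + m)"
          using glue[OF len1_props(1)[OF Z(2,1) cd(3) iso_inv_nz i(3)] c pr'(1) m1 iso_inv_nz
              len1_props(2)[OF Z(2,1) cd(3) iso_inv_nz i(3)] pr'(2)] by auto
        hence "proper_series C E B (1 + m) Xs' fs'" using i unfolding proper_props by simp
        hence "1 + m \<le> Suc N" using bd by blast
        thus "m \<le> N" by simp
      qed
      obtain n As fa where A: "composition_series C E (cdom C i) n As fa" using Suc.IH[OF cd(3) bA] by blast
      obtain m Cs gs where Cc: "composition_series C E (ccod C p) m Cs gs" using Suc.IH[OF cd(5) bC] by blast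
      have m1: "m \<ge> 1"
      proof (rule ccontr)
        assume "\<not> m \<ge> 1" hence "m = 0" by simp
        hence "zero_obj C (ccod C p)" using Cc unfolding composition_series_def subobj_series_def by auto
        thus False using nzC by blast
      qed
      have A': "subobj_series C E (cdom C i) n As fa" "props C E (simple_obj C E) fa n"
        using A unfolding comp_props by auto
      have C': "subobj_series C E (ccod C p) m Cs gs" "props C E (simple_obj C E) gs m"
        using Cc unfolding comp_props by auto
      obtain Xs fs where "subobj_series C E (ccod C i) (n + m) Xs fs" "props C E (simple_obj C E) fs (n + m)"
        using glue[OF A'(1) c C'(1) m1 iso_inv_simple A'(2) C'(2)] by blast
      hence "composition_series C E B (n + m) Xs fs" using i unfolding comp_props by simp
      thus ?thesis by blast
    qed
  qed
qed

end


context excat begin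

lemma serreD:
  assumes "serre_subcat C E S"
  shows "S \<subseteq> E" "\<exists>Z\<in>S. zero_obj C Z"
    "\<And>X Y. X \<in> S \<Longrightarrow> Y \<in> E \<Longrightarrow> iso_obj C X Y \<Longrightarrow> Y \<in> S"
    "\<And>A B P i1 i2 p1 p2. A \<in> S \<Longrightarrow> B \<in> S \<Longrightarrow> is_biproduct C A B P i1 i2 p1 p2 \<Longrightarrow> P \<in> S"
    "\<And>i p. conflation C E i p \<Longrightarrow> (ccod C i \<in> S \<longleftrightarrow> cdom C i \<in> S \<and> ccod C p \<in> S)"
  using assms unfolding serre_subcat_def by blast+

lemma serre_zero: "serre_subcat C E S \<Longrightarrow> zero_obj C Z \<Longrightarrow> Z \<in> E \<Longrightarrow> Z \<in> S"
  using serreD(1,2,3) zero_iso by blast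

lemma serre_E: "serre_subcat C E E"
  unfolding serre_subcat_def using E_zero E_bip confD by blast

lemma closure_serre: assumes X: "X \<subseteq> E" shows "serre_subcat C E (serre_closure C E X)"
proof -
  let ?F = "{S. serre_subcat C E S \<and> X \<subseteq> S}"
  have EF: "E \<in> ?F" using serre_E X by blast
  obtain Z where Z: "Z \<in> E" "zero_obj C Z" using E_zero by blast
  have 1: "\<Inter>?F \<subseteq> E" using EF by blast
  have 2: "Z \<in> \<Inter>?F"
  proof (rule InterI)
    fix S assume "S \<in> ?F" thus "Z \<in> S" using serre_zero[of S Z] Z by blast
  qed
  have 3: "\<forall>X'\<in>\<Inter>?F. \<forall>Y\<in>E. iso_obj C X' Y \<longrightarrow> Y \<in> \<Inter>?F"
  proof (intro ballI impI InterI)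
    fix X' Y S assume "X' \<in> \<Inter>?F" "Y \<in> E" "iso_obj C X' Y" "S \<in> ?F"
    thus "Y \<in> S" using serreD(3)[of S X' Y] by blast
  qed
  have 4: "\<forall>A\<in>\<Inter>?F. \<forall>B\<in>\<Inter>?F. \<forall>P i1 i2 p1 p2. is_biproduct C A B P i1 i2 p1 p2 \<longrightarrow> P \<in> \<Inter>?F"
  proof (intro ballI allI impI InterI)
    fix A B P i1 i2 p1 p2 S assume "A \<in> \<Inter>?F" "B \<in> \<Inter>?F" "is_biproduct C A B P i1 i2 p1 p2" "S \<in> ?F"
    thus "P \<in> S" using serreD(4)[of S A B P i1 i2 p1 p2] by blast
  qed
  have 5: "\<forall>i p. conflation C E i p \<longrightarrow> (ccod C i \<in> \<Inter>?F \<longleftrightarrow> cdom C i \<in> \<Inter>?F \<and> ccod C p \<in> \<Inter>?F)"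
  proof (intro allI impI)
    fix i p assume c: "conflation C E i p"
    have "\<And>S. S \<in> ?F \<Longrightarrow> (ccod C i \<in> S \<longleftrightarrow> cdom C i \<in> S \<and> ccod C p \<in> S)" using serreD(5)[OF _ c] by blast
    thus "ccod C i \<in> \<Inter>?F \<longleftrightarrow> cdom C i \<in> \<Inter>?F \<and> ccod C p \<in> \<Inter>?F" by blast
  qed
  have z2: "\<exists>Z\<in>\<Inter>?F. zero_obj C Z" using 2 Z by blast
  show ?thesis using 1 z2 3 4 5 unfolding serre_closure_def serre_subcat_def by (intro conjI) assumption+
qed

lemma closure_least: "serre_subcat C E S \<Longrightarrow> X \<subseteq> S \<Longrightarrow> serre_closure C E X \<subseteq> S"
  unfolding serre_closure_def by blast
lemma closure_incl: "X \<subseteq> serre_closure C E X"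
  unfolding serre_closure_def by blast
lemma closure_mono: "X \<subseteq> Y \<Longrightarrow> serre_closure C E X \<subseteq> serre_closure C E Y"
  unfolding serre_closure_def by blast

lemma epi_from_zero: assumes z: "zero_obj C B" and e: "epi C p" and d: "cdom C p = B"
  shows "zero_obj C (ccod C p)"
proof -
  have pa: "p \<in> Ar C" using e unfolding epi_def by blast
  have W: "ccod C p \<in> Ob C" using pa by (simp add: cs)
  have "cid C (ccod C p) \<cdot> p = czero C (ccod C p) (ccod C p) \<cdot> p"
  proof -
    have "cid C (ccod C p) \<cdot> p \<in> hom C B (ccod C p)" "czero C (ccod C p) (ccod C p) \<cdot> p \<in> hom C B (ccod C p)"
      using pa d W zero_ob[OF z] by (simp_all add: hom_def cs)
    thus ?thesis using zero_from[OF z] by metis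
  qed
  hence "cid C (ccod C p) = czero C (ccod C p) (ccod C p)"
    using epiD'[OF e, of "cid C (ccod C p)" "czero C (ccod C p) (ccod C p)"] W by (simp add: cs)
  thus ?thesis using zeroI W by blast
qed

lemma zero_comp: assumes z: "zero_obj C B" and c: "composition_series C E B n Xs fs" shows "n = 0"
proof (rule ccontr)
  assume "n \<noteq> 0"
  hence n: "n \<in> {1..n}" by auto
  have "inflation C E (fs n)" "ccod C (fs n) = B" using c n unfolding composition_series_def subobj_series_def by auto
  then obtain p where p: "conflation C E (fs n) p" "cdom C p = B" unfolding inflation_def using confD by blast
  have "zero_obj C (ccod C p)" using epi_from_zero[OF z coker_epi[OF confD(2)[OF p(1)]] p(2)] .
  moreover have "simple_obj C E (ccod C p)" using c n p(1) unfolding composition_series_def series_factor_def by blast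
  ultimately show False unfolding simple_obj_def by blast
qed

lemma EX: assumes len: "length_cat C E" and B: "B \<in> E" shows "\<exists>n Xs fs. composition_series C E B n Xs fs"
proof -
  obtain N where "\<forall>n Xs fs. proper_series C E B n Xs fs \<longrightarrow> n \<le> N"
    using len B unfolding length_cat_def finite_length_def by blast
  thus ?thesis using EX_aux B by blast
qed

lemma retarget:
  assumes c: "composition_series C E B' n Xs fs" and n: "n \<ge> 1" and BE: "B \<in> E"
    and f: "f \<in> hom C B' B" and g: "g \<in> hom C B B'" and gf: "g \<cdot> f = cid C B'" and fg: "f \<cdot> g = cid C B"
  shows "composition_series C E B n (Xs(n := B)) (fs(n := f \<cdot> fs n))"
    "\<And>k Z. series_factor C E (fs(n := f \<cdot> fs n)) k Z \<longleftrightarrow> series_factor C E fs k Z"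
proof -
  have f': "f \<in> Ar C" "cdom C f = B'" "ccod C f = B" "g \<in> Ar C" "cdom C g = B" "ccod C g = B'"
    using f g by (auto simp: hom_def)
  have nn: "n \<in> {1..n}" using n by auto
  have top: "inflation C E (fs n)" "ccod C (fs n) = B'" "cdom C (fs n) = Xs (n - 1)"
    using c nn unfolding composition_series_def subobj_series_def by auto
  have fac: "series_factor C E (fs(n := f \<cdot> fs n)) k Z \<longleftrightarrow> series_factor C E fs k Z" for k Z
  proof (cases "k = n")
    case True
    show ?thesis
    proof
      assume "series_factor C E (fs(n := f \<cdot> fs n)) k Z"
      then obtain p where p: "conflation C E (f \<cdot> fs n) p" "ccod C p = Z" using True unfolding series_factor_def by auto
      have fa: "fs n \<in> Ar C" using top(1) unfolding inflation_def using confD by blast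
      have B'E: "B' \<in> E" using confD(4)[of "fs n"] top unfolding inflation_def by blast
      have "conflation C E (g \<cdot> (f \<cdot> fs n)) (p \<cdot> f)"
        using conf_iso[OF p(1), of g f] f' fa top gf fg B'E by (simp add: cs)
      moreover have "g \<cdot> (f \<cdot> fs n) = fs n" using f' fa top gf by (simp add: cs del: c_assoc) (metis c_assoc c_id_l)
      moreover have "ccod C (p \<cdot> f) = Z" using p confD[OF p(1)] f' fa top by (simp add: cs)
      ultimately show "series_factor C E fs k Z" using True unfolding series_factor_def by metis
    next
      assume "series_factor C E fs k Z"
      then obtain p where p: "conflation C E (fs n) p" "ccod C p = Z" using True unfolding series_factor_def by auto
      have "conflation C E (f \<cdot> fs n) (p \<cdot> g)" using conf_iso[OF p(1), of f g] f' top gf fg BE by simp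
      moreover have "ccod C (p \<cdot> g) = Z" using p confD[OF p(1)] f' top by (simp add: cs)
      ultimately show "series_factor C E (fs(n := f \<cdot> fs n)) k Z" using True unfolding series_factor_def by auto
    qed
  next
    case False thus ?thesis unfolding series_factor_def by simp
  qed
  thus "\<And>k Z. series_factor C E (fs(n := f \<cdot> fs n)) k Z \<longleftrightarrow> series_factor C E fs k Z" .
  have infl: "inflation C E (f \<cdot> fs n)"
  proof -
    obtain p where p: "conflation C E (fs n) p" using top unfolding inflation_def by blast
    have "conflation C E (f \<cdot> fs n) (p \<cdot> g)" using conf_iso[OF p, of f g] f' top gf fg BE by simp
    thus ?thesis unfolding inflation_def by blast
  qed
  have fa: "fs n \<in> Ar C" using top(1) unfolding inflation_def using confD by blast
  have "subobj_series C E B n (Xs(n := B)) (fs(n := f \<cdot> fs n))"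
    unfolding subobj_series_def
  proof (intro conjI ballI)
    show "zero_obj C ((Xs(n := B)) 0)" using c n unfolding composition_series_def subobj_series_def by auto
    show "(Xs(n := B)) n = B" by simp
  next
    fix k assume k: "k \<in> {1..n}"
    show "inflation C E ((fs(n := f \<cdot> fs n)) k)" using k c infl unfolding composition_series_def subobj_series_def by auto
  next
    fix k assume k: "k \<in> {1..n}"
    show "cdom C ((fs(n := f \<cdot> fs n)) k) = (Xs(n := B)) (k - 1)"
      using k c n top f' fa unfolding composition_series_def subobj_series_def by (auto simp: cs)
  next
    fix k assume k: "k \<in> {1..n}"
    show "ccod C ((fs(n := f \<cdot> fs n)) k) = (Xs(n := B)) k"
      using k c n top f' fa unfolding composition_series_def subobj_series_def by (auto simp: cs)
  qed
  thus "composition_series C E B n (Xs(n := B)) (fs(n := f \<cdot> fs n))"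
    using c fac unfolding composition_series_def by simp
qed

end


context excat begin

definition isoU :: "'o set \<Rightarrow> bool" where
  "isoU U \<longleftrightarrow> U \<subseteq> E \<and> (\<forall>W\<in>U. \<forall>W'\<in>E. iso_obj C W' W \<longrightarrow> W' \<in> U)"

definition Tset :: "'o set \<Rightarrow> 'o set" where
  "Tset U = {B \<in> E. \<forall>n Xs fs. composition_series C E B n Xs fs \<longrightarrow> props C E (\<lambda>Z. Z \<in> U) fs n}"

lemma isoU_inv: "isoU U \<Longrightarrow> iso_inv (\<lambda>Z. Z \<in> U)"
  unfolding isoU_def iso_inv_def by blast

lemma comp_E: "composition_series C E B n Xs fs \<Longrightarrow> n \<ge> 1 \<Longrightarrow> B \<in> E"
proof -
  assume c: "composition_series C E B n Xs fs" and n: "n \<ge> 1"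
  hence "inflation C E (fs n)" "ccod C (fs n) = B" unfolding composition_series_def subobj_series_def by auto
  thus "B \<in> E" unfolding inflation_def using confD by blast
qed

lemma T_iso: assumes B: "B \<in> Tset U" and B': "B' \<in> E" and iso: "iso_obj C B' B" shows "B' \<in> Tset U"
proof -
  have BE: "B \<in> E" using B unfolding Tset_def by blast
  have "props C E (\<lambda>Z. Z \<in> U) fs n" if c: "composition_series C E B' n Xs fs" for n Xs fs
  proof (cases "n = 0")
    case True thus ?thesis unfolding props_def by simp
  next
    case False
    obtain f g where fg: "f \<in> hom C B' B" "g \<in> hom C B B'" "g \<cdot> f = cid C B'" "f \<cdot> g = cid C B"
      using iso unfolding iso_obj_def by blast
    note rt = retarget[OF c _ BE fg]
    have "props C E (\<lambda>Z. Z \<in> U) (fs(n := f \<cdot> fs n)) n" using B rt(1) False unfolding Tset_def by auto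
    thus ?thesis using rt(2) False unfolding props_def by auto
  qed
  thus ?thesis unfolding Tset_def using B' by blast
qed

lemma JH_props:
  assumes jh: "jordan_hoelder C E" and U: "isoU U" and X: "X \<in> E"
    and c1: "composition_series C E X n Xs fs" and p1: "props C E (\<lambda>Z. Z \<in> U) fs n"
    and c2: "composition_series C E X m Ys gs"
  shows "props C E (\<lambda>Z. Z \<in> U) gs m"
proof -
  obtain \<sigma> where nm: "n = m" and \<sigma>: "bij_betw \<sigma> {1..n} {1..n}"
    and fac: "\<forall>k\<in>{1..n}. \<exists>Z Z'. series_factor C E fs k Z \<and> series_factor C E gs (\<sigma> k) Z' \<and> iso_obj C Z Z'"
    using jh X c1 c2 unfolding jordan_hoelder_def by blast
  show ?thesis unfolding props_def
  proof (intro ballI allI impI)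
    fix k' W assume k': "k' \<in> {1..m}" and W: "series_factor C E gs k' W"
    have "k' \<in> \<sigma> ` {1..n}" using \<sigma> k' nm unfolding bij_betw_def by auto
    then obtain k where k: "k \<in> {1..n}" "\<sigma> k = k'" by blast
    obtain Z Z' where ZZ: "series_factor C E fs k Z" "series_factor C E gs k' Z'" "iso_obj C Z Z'"
      using fac k by blast
    have "Z \<in> U" using p1 ZZ(1) k unfolding props_def by blast
    moreover have "iso_obj C W Z" using fac_iso[OF W ZZ(2)] ZZ(3) iso_sym iso_trans by blast
    moreover have "W \<in> E" using factor_E W by blast
    ultimately show "W \<in> U" using U unfolding isoU_def by blast
  qed
qed

lemma glue2:
  assumes A: "composition_series C E (cdom C i) n As fa" and c: "conflation C E i p"
    and Cc: "composition_series C E (ccod C p) m Cs gs" and m: "m \<ge> 1"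
  shows "\<exists>Xs ks. composition_series C E (ccod C i) (n + m) Xs ks \<and> (\<forall>k. k \<le> n \<longrightarrow> ks k = fa k) \<and>
     (\<forall>j\<in>{1..m}. \<forall>Z Z'. series_factor C E gs j Z \<longrightarrow> series_factor C E ks (n + j) Z' \<longrightarrow> iso_obj C Z' Z)"
proof -
  have a': "zero_obj C (As 0)" "rel_series C E (As 0) (cdom C i) n As fa" "props C E (simple_obj C E) fa n"
    using A unfolding comp_props subobj_rel by auto
  have b': "zero_obj C (Cs 0)" "rel_series C E (Cs 0) (ccod C p) m Cs gs" "props C E (simple_obj C E) gs m"
    using Cc unfolding comp_props subobj_rel by auto
  obtain Zs ks where Z: "rel_series C E (As 0) (ccod C i) (n + m) Zs ks" "\<forall>k. k \<le> n \<longrightarrow> ks k = fa k"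
    "\<forall>j\<in>{1..m}. \<forall>Z Z'. series_factor C E gs j Z \<longrightarrow> series_factor C E ks (n + j) Z' \<longrightarrow> iso_obj C Z' Z"
    using concat_conf[OF a'(2) c b'(1) b'(2) m] by blast
  have "Zs 0 = As 0" using Z(1) unfolding rel_series_def by simp
  hence "subobj_series C E (ccod C i) (n + m) Zs ks" using Z(1) a'(1) unfolding subobj_rel by simp
  moreover have "props C E (simple_obj C E) ks (n + m)" using props_concat[OF iso_inv_simple a'(3) b'(3) b'(2) Z(2) Z(3)] .
  ultimately show ?thesis using Z(2,3) unfolding comp_props by blast
qed

lemma T_conf:
  assumes len: "length_cat C E" and jh: "jordan_hoelder C E" and U: "isoU U"
    and c: "conflation C E i p"
  shows "ccod C i \<in> Tset U \<longleftrightarrow> cdom C i \<in> Tset U \<and> ccod C p \<in> Tset U"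
proof -
  note cd = confD[OF c]
  show ?thesis
  proof (cases "zero_obj C (ccod C p)")
    case True
    have iso: "iso_obj C (cdom C i) (ccod C i)" using iso_mor_obj conf_zero_iso[OF c True] by blast
    have CT: "ccod C p \<in> Tset U" unfolding Tset_def using cd zero_comp[OF True] unfolding props_def by auto
    show ?thesis using T_iso iso iso_sym cd CT by blast
  next
    case False
    obtain n As fa where A: "composition_series C E (cdom C i) n As fa" using EX[OF len cd(3)] by blast
    obtain m Cs gs where Cc: "composition_series C E (ccod C p) m Cs gs" using EX[OF len cd(5)] by blast
    have m1: "m \<ge> 1"
    proof (rule ccontr)
      assume "\<not> m \<ge> 1" hence "m = 0" by simp
      hence "zero_obj C (ccod C p)" using Cc unfolding composition_series_def subobj_series_def by auto
      thus False using False by blast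
    qed
    show ?thesis
    proof
      assume BT: "ccod C i \<in> Tset U"
      have "props C E (\<lambda>Z. Z \<in> U) fa' n'" if A': "composition_series C E (cdom C i) n' As' fa'" for n' As' fa'
      proof -
        obtain Xs ks where K: "composition_series C E (ccod C i) (n' + m) Xs ks" "\<forall>k. k \<le> n' \<longrightarrow> ks k = fa' k"
          using glue2[OF A' c Cc m1] by blast
        have pks: "props C E (\<lambda>Z. Z \<in> U) ks (n' + m)" using BT K(1) unfolding Tset_def by blast
        show ?thesis unfolding props_def
        proof (intro ballI allI impI)
          fix k Z assume k: "k \<in> {1..n'}" and Z: "series_factor C E fa' k Z"
          have "series_factor C E ks k Z" using Z K(2) k unfolding series_factor_def by auto
          moreover have "k \<in> {1..n' + m}" using k by auto
          ultimately show "Z \<in> U" using pks unfolding props_def by blast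
        qed
      qed
      hence AT: "cdom C i \<in> Tset U" unfolding Tset_def using cd by blast
      have "props C E (\<lambda>Z. Z \<in> U) gs' m'" if C': "composition_series C E (ccod C p) m' Cs' gs'" for m' Cs' gs'
      proof -
        have m1': "m' \<ge> 1"
        proof (rule ccontr)
          assume "\<not> m' \<ge> 1" hence "m' = 0" by simp
          hence "zero_obj C (ccod C p)" using C' unfolding composition_series_def subobj_series_def by auto
          thus False using False by blast
        qed
        obtain Xs ks where K: "composition_series C E (ccod C i) (n + m') Xs ks"
          "\<forall>j\<in>{1..m'}. \<forall>Z Z'. series_factor C E gs' j Z \<longrightarrow> series_factor C E ks (n + j) Z' \<longrightarrow> iso_obj C Z' Z"
          using glue2[OF A c C' m1'] by blast
        have pk: "props C E (\<lambda>Z. Z \<in> U) ks (n + m')" using BT K(1) unfolding Tset_def by blast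
        show ?thesis unfolding props_def
        proof (intro ballI allI impI)
          fix j W assume j: "j \<in> {1..m'}" and W: "series_factor C E gs' j W"
          have jj: "n + j \<in> {1..n + m'}" using j by auto
          have rr: "rel_series C E (Xs 0) (ccod C i) (n + m') Xs ks"
            using K(1) unfolding composition_series_def subobj_rel by blast
          obtain Z' where Z': "series_factor C E ks (n + j) Z'"
            using rel_factor_ex[OF rr jj] by blast
          have "Z' \<in> U" using pk Z' j unfolding props_def by auto
          moreover have "iso_obj C W Z'" using K(2) j W Z' iso_sym by blast
          moreover have "W \<in> E" using factor_E W by blast
          ultimately show "W \<in> U" using U unfolding isoU_def by blast
        qed
      qed
      hence CT: "ccod C p \<in> Tset U" unfolding Tset_def using cd by blast
      show "cdom C i \<in> Tset U \<and> ccod C p \<in> Tset U" using AT CT by blast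
    next
      assume "cdom C i \<in> Tset U \<and> ccod C p \<in> Tset U"
      hence pa: "props C E (\<lambda>Z. Z \<in> U) fa n" and pc: "props C E (\<lambda>Z. Z \<in> U) gs m"
        using A Cc unfolding Tset_def by auto
      obtain Xs ks where K: "composition_series C E (ccod C i) (n + m) Xs ks" "\<forall>k. k \<le> n \<longrightarrow> ks k = fa k"
          "\<forall>j\<in>{1..m}. \<forall>Z Z'. series_factor C E gs j Z \<longrightarrow> series_factor C E ks (n + j) Z' \<longrightarrow> iso_obj C Z' Z"
        using glue2[OF A c Cc m1] by blast
      have rg: "rel_series C E (Cs 0) (ccod C p) m Cs gs" using Cc unfolding composition_series_def subobj_rel by blast
      have pk: "props C E (\<lambda>Z. Z \<in> U) ks (n + m)" using props_concat[OF isoU_inv[OF U] pa pc rg K(2) K(3)] .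
      have "props C E (\<lambda>Z. Z \<in> U) gs' m'" if "composition_series C E (ccod C i) m' Ys gs'" for m' Ys gs'
        using JH_props[OF jh U cd(4) K(1) pk that] .
      thus "ccod C i \<in> Tset U" unfolding Tset_def using cd by blast
    qed
  qed
qed

lemma T_serre:
  assumes len: "length_cat C E" and jh: "jordan_hoelder C E" and U: "isoU U"
  shows "serre_subcat C E (Tset U)"
proof -
  obtain Z where Z: "Z \<in> E" "zero_obj C Z" using E_zero by blast
  have ZT: "Z \<in> Tset U" unfolding Tset_def using Z zero_comp unfolding props_def by auto
  have 3: "\<forall>X\<in>Tset U. \<forall>Y\<in>E. iso_obj C X Y \<longrightarrow> Y \<in> Tset U" using T_iso iso_sym by blast
  have 5: "\<forall>i p. conflation C E i p \<longrightarrow> (ccod C i \<in> Tset U \<longleftrightarrow> cdom C i \<in> Tset U \<and> ccod C p \<in> Tset U)"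
    using T_conf[OF len jh U] by blast
  have 4: "\<forall>A\<in>Tset U. \<forall>B\<in>Tset U. \<forall>P i1 i2 p1 p2. is_biproduct C A B P i1 i2 p1 p2 \<longrightarrow> P \<in> Tset U"
  proof (intro ballI allI impI)
    fix A B P i1 i2 p1 p2 assume A: "A \<in> Tset U" and B: "B \<in> Tset U" and b: "is_biproduct C A B P i1 i2 p1 p2"
    have AE: "A \<in> E" and BE: "B \<in> E" using A B unfolding Tset_def by auto
    have c: "conflation C E i1 p2" using bip_conf[OF b AE BE] .
    have "i1 \<in> hom C A P" "p2 \<in> hom C P B" using b unfolding is_biproduct_def by auto
    hence "cdom C i1 = A" "ccod C i1 = P" "ccod C p2 = B" by (auto simp: hom_def)
    thus "P \<in> Tset U" using 5 c A B by metis
  qed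
  have 1: "Tset U \<subseteq> E" unfolding Tset_def by blast
  show ?thesis unfolding serre_subcat_def using 1 ZT Z 3 4 5 by blast
qed

lemma iso_class_eq: "X \<in> E \<Longrightarrow> Y \<in> E \<Longrightarrow> iso_obj C X Y \<Longrightarrow> iso_class C E X = iso_class C E Y"
  unfolding iso_class_def using iso_trans iso_sym by blast

lemma classes_isoU: "\<Y> \<subseteq> simp_classes C E \<Longrightarrow> isoU (\<Union>\<Y>)"
  unfolding isoU_def simp_classes_def iso_class_def using iso_trans by blast

lemma class_self: "X \<in> E \<Longrightarrow> X \<in> iso_class C E X"
  unfolding iso_class_def using iso_refl E_ob by blast

lemma classes_in_T:
  assumes jh: "jordan_hoelder C E" and Y: "\<Y> \<subseteq> simp_classes C E"
  shows "\<Union>\<Y> \<subseteq> Tset (\<Union>\<Y>)"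
proof
  fix S' assume S': "S' \<in> \<Union>\<Y>"
  then obtain S0 where S0: "simple_obj C E S0" "iso_class C E S0 \<in> \<Y>" "S' \<in> iso_class C E S0"
    using Y unfolding simp_classes_def by blast
  have S'E: "S' \<in> E" and iso: "iso_obj C S' S0" using S0(3) unfolding iso_class_def by auto
  obtain Z where Z: "Z \<in> E" "zero_obj C Z" using E_zero by blast
  have simp': "simple_obj C E S'" using simple_iso[OF S0(1) S'E iso] .
  have c1: "composition_series C E S' 1 (\<lambda>k. if k = 0 then Z else S') (\<lambda>_. czero C Z S')"
    using len1_props[OF Z(2,1) S'E iso_inv_simple simp'] by (simp add: comp_props)
  have U: "isoU (\<Union>\<Y>)" using classes_isoU[OF Y] .
  have p1: "props C E (\<lambda>W. W \<in> \<Union>\<Y>) (\<lambda>_. czero C Z S') 1"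
    unfolding props_def
  proof (intro ballI allI impI)
    fix k W assume "k \<in> {1..1}" and W: "series_factor C E (\<lambda>_. czero C Z S') k W"
    have "iso_obj C W S'" using len1(2)[OF Z(2,1) S'E W] .
    moreover have "W \<in> E" using factor_E W by blast
    ultimately show "W \<in> \<Union>\<Y>" using S' U unfolding isoU_def by blast
  qed
  have "props C E (\<lambda>W. W \<in> \<Union>\<Y>) fs n" if "composition_series C E S' n Xs fs" for n Xs fs
    using JH_props[OF jh U S'E c1 p1 that] .
  thus "S' \<in> Tset (\<Union>\<Y>)" unfolding Tset_def using S'E by blast
qed

lemma simple_not_in_T:
  assumes Y: "\<Y> \<subseteq> simp_classes C E" and S: "simple_obj C E S" and nY: "iso_class C E S \<notin> \<Y>"
  shows "S \<notin> Tset (\<Union>\<Y>)"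
proof
  assume ST: "S \<in> Tset (\<Union>\<Y>)"
  have SE: "S \<in> E" using S unfolding simple_obj_def by blast
  obtain Z where Z: "Z \<in> E" "zero_obj C Z" using E_zero by blast
  have c1: "composition_series C E S 1 (\<lambda>k. if k = 0 then Z else S) (\<lambda>_. czero C Z S)"
    using len1_props[OF Z(2,1) SE iso_inv_simple S] by (simp add: comp_props)
  have "conflation C E (czero C Z S) (cid C S)" using triv_conf Z SE by blast
  hence "series_factor C E (\<lambda>_. czero C Z S) 1 S" unfolding series_factor_def using E_ob SE by (auto simp: cs)
  hence "S \<in> \<Union>\<Y>" using ST c1 unfolding Tset_def props_def by auto
  then obtain S0 where S0: "iso_class C E S0 \<in> \<Y>" "S \<in> iso_class C E S0" "S0 \<in> E"
    using Y unfolding simp_classes_def simple_obj_def by blast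
  have "iso_class C E S = iso_class C E S0"
    using iso_class_eq[OF SE S0(3)] S0(2) unfolding iso_class_def by blast
  thus False using nY S0(1) by simp
qed

end


context excat begin

lemma classes_E: "\<X> \<subseteq> simp_classes C E \<Longrightarrow> \<Union>\<X> \<subseteq> E"
  unfolding simp_classes_def iso_class_def by blast

lemma serre_gen:
  assumes len: "length_cat C E" and S: "serre_subcat C E S"
  shows "S \<subseteq> serre_closure C E (\<Union>{K \<in> simp_classes C E. K \<subseteq> S})"
proof
  let ?X = "{K \<in> simp_classes C E. K \<subseteq> S}"
  let ?Cl = "serre_closure C E (\<Union>?X)"
  have "?X \<subseteq> simp_classes C E" by blast
  from closure_serre[OF classes_E[OF this]] have ClS: "serre_subcat C E ?Cl" .
  fix B assume B: "B \<in> S"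
  have BE: "B \<in> E" using serreD(1)[OF S] B by blast
  obtain n Xs fs where c: "composition_series C E B n Xs fs" using EX[OF len BE] by blast
  have ser: "zero_obj C (Xs 0)" "Xs n = B"
    "\<And>k. k \<in> {1..n} \<Longrightarrow> inflation C E (fs k) \<and> cdom C (fs k) = Xs (k - 1) \<and> ccod C (fs k) = Xs k"
    "\<And>k Z. k \<in> {1..n} \<Longrightarrow> series_factor C E fs k Z \<Longrightarrow> simple_obj C E Z"
    using c unfolding composition_series_def subobj_series_def by auto
  have down: "k \<le> n \<Longrightarrow> Xs (n - k) \<in> S" for k
  proof (induction k)
    case 0 thus ?case using ser B by simp
  next
    case (Suc k)
    define t where "t = n - k"
    have t: "t \<in> {1..n}" "n - Suc k = t - 1" using Suc.prems unfolding t_def by auto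
    have Xt: "Xs t \<in> S" using Suc unfolding t_def by simp
    obtain p where p: "conflation C E (fs t) p" using ser(3)[OF t(1)] unfolding inflation_def by blast
    have "cdom C (fs t) \<in> S" using serreD(5)[OF S p] Xt ser(3)[OF t(1)] by simp
    thus ?case using ser(3)[OF t(1)] t(2) by simp
  qed
  have facS: "Z \<in> S" if k: "k \<in> {1..n}" and Z: "series_factor C E fs k Z" for k Z
  proof -
    obtain p where p: "conflation C E (fs k) p" "ccod C p = Z" using Z unfolding series_factor_def by blast
    have "Xs k \<in> S" using down[of "n - k"] k by simp
    thus ?thesis using serreD(5)[OF S p(1)] ser(3)[OF k] p(2) by simp
  qed
  have up: "k \<le> n \<Longrightarrow> Xs k \<in> ?Cl" for k
  proof (induction k)
    case 0
    have "Xs 0 \<in> E" using down[of n] serreD(1)[OF S] by auto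
    thus ?case using serre_zero[OF ClS ser(1)] by simp
  next
    case (Suc k)
    have k: "Suc k \<in> {1..n}" using Suc.prems by auto
    obtain p where p: "conflation C E (fs (Suc k)) p" using ser(3)[OF k] unfolding inflation_def by blast
    have fZ: "series_factor C E fs (Suc k) (ccod C p)" using p unfolding series_factor_def by blast
    have ZS: "ccod C p \<in> S" using facS[OF k fZ] .
    have Zsim: "simple_obj C E (ccod C p)" using ser(4)[OF k fZ] .
    have ZE: "ccod C p \<in> E" using confD[OF p] by blast
    have "iso_class C E (ccod C p) \<subseteq> S"
      unfolding iso_class_def using serreD(3)[OF S ZS] iso_sym by blast
    hence "iso_class C E (ccod C p) \<in> ?X" using Zsim unfolding simp_classes_def by blast
    hence "ccod C p \<in> \<Union>?X" using class_self[OF ZE] by blast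
    hence "ccod C p \<in> ?Cl" by (rule subsetD[OF closure_incl])
    moreover have "Xs k \<in> ?Cl" using Suc by simp
    ultimately have "ccod C (fs (Suc k)) \<in> ?Cl" using serreD(5)[OF ClS p] ser(3)[OF k] by simp
    thus ?case using ser(3)[OF k] by simp
  qed
  show "B \<in> ?Cl" using up[of n] ser(2) by simp
qed

end

theorem mainTheorem14:
  fixes C :: "('o, 'm) acat" and E :: "'o set"
  assumes "exact_cat C E" and "length_cat C E" and "jordan_hoelder C E"
  shows "bij_betw (\<lambda>\<X>. serre_closure C E (\<Union>\<X>)) (Pow (simp_classes C E)) (serre_subcats C E)
    \<and> (\<forall>\<X>\<in>Pow (simp_classes C E). \<forall>\<Y>\<in>Pow (simp_classes C E).
         \<X> \<subseteq> \<Y> \<longrightarrow> serre_closure C E (\<Union>\<X>) \<subseteq> serre_closure C E (\<Union>\<Y>))"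
proof -
  have ab: "abelian C" using assms(1) unfolding exact_cat_def by blast
  interpret excat C E using ab assms(1) by (simp add: excat_def abcat_def excat_axioms_def)
  have sub: "\<X> \<subseteq> \<Y>" if X: "\<X> \<subseteq> simp_classes C E" and Y: "\<Y> \<subseteq> simp_classes C E"
    and le: "serre_closure C E (\<Union>\<X>) \<subseteq> serre_closure C E (\<Union>\<Y>)" for \<X> \<Y>
  proof
    fix K assume K: "K \<in> \<X>"
    then obtain S where S: "simple_obj C E S" "K = iso_class C E S" using X unfolding simp_classes_def by blast
    have SE: "S \<in> E" using S unfolding simple_obj_def by blast
    have "S \<in> \<Union>\<X>" using K S class_self[OF SE] by blast
    hence "S \<in> serre_closure C E (\<Union>\<Y>)" using closure_incl le by blast
    moreover have "serre_closure C E (\<Union>\<Y>) \<subseteq> Tset (\<Union>\<Y>)"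
      using closure_least[OF T_serre[OF assms(2,3) classes_isoU[OF Y]] classes_in_T[OF assms(3) Y]] .
    ultimately have "S \<in> Tset (\<Union>\<Y>)" by blast
    thus "K \<in> \<Y>" using simple_not_in_T[OF Y S(1)] S(2) by blast
  qed
  have inj: "inj_on (\<lambda>\<X>. serre_closure C E (\<Union>\<X>)) (Pow (simp_classes C E))"
    unfolding inj_on_def
  proof (intro ballI impI)
    fix x y assume x: "x \<in> Pow (simp_classes C E)" and y: "y \<in> Pow (simp_classes C E)"
      and e: "serre_closure C E (\<Union>x) = serre_closure C E (\<Union>y)"
    have "x \<subseteq> y" using sub[of x y] x y e by simp
    moreover have "y \<subseteq> x" using sub[of y x] x y e by simp
    ultimately show "x = y" by blast
  qed
  have img: "(\<lambda>\<X>. serre_closure C E (\<Union>\<X>)) ` Pow (simp_classes C E) = serre_subcats C E"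
  proof
    show "(\<lambda>\<X>. serre_closure C E (\<Union>\<X>)) ` Pow (simp_classes C E) \<subseteq> serre_subcats C E"
    proof
      fix S assume "S \<in> (\<lambda>\<X>. serre_closure C E (\<Union>\<X>)) ` Pow (simp_classes C E)"
      then obtain X where X: "X \<subseteq> simp_classes C E" "S = serre_closure C E (\<Union>X)" by blast
      show "S \<in> serre_subcats C E" unfolding serre_subcats_def using closure_serre[OF classes_E[OF X(1)]] X(2) by simp
    qed
    show "serre_subcats C E \<subseteq> (\<lambda>\<X>. serre_closure C E (\<Union>\<X>)) ` Pow (simp_classes C E)"
    proof
      fix S assume "S \<in> serre_subcats C E"
      hence S: "serre_subcat C E S" unfolding serre_subcats_def by blast
      let ?X = "{K \<in> simp_classes C E. K \<subseteq> S}"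
      have "serre_closure C E (\<Union>?X) \<subseteq> S" by (rule closure_least[OF S]) blast
      moreover have "S \<subseteq> serre_closure C E (\<Union>?X)" using serre_gen[OF assms(2) S] .
      ultimately have "S = serre_closure C E (\<Union>?X)" by blast
      moreover have "?X \<in> Pow (simp_classes C E)" by blast
      ultimately show "S \<in> (\<lambda>\<X>. serre_closure C E (\<Union>\<X>)) ` Pow (simp_classes C E)" by blast
    qed
  qed
  have mono: "\<forall>\<X>\<in>Pow (simp_classes C E). \<forall>\<Y>\<in>Pow (simp_classes C E).
         \<X> \<subseteq> \<Y> \<longrightarrow> serre_closure C E (\<Union>\<X>) \<subseteq> serre_closure C E (\<Union>\<Y>)"
  proof (intro ballI impI)
    fix X Y :: "'o set set" assume "X \<subseteq> Y"
    hence "\<Union>X \<subseteq> \<Union>Y" by blast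
    thus "serre_closure C E (\<Union>X) \<subseteq> serre_closure C E (\<Union>Y)" by (rule closure_mono)
  qed
  show ?thesis using inj img mono unfolding bij_betw_def by blast
qed



end
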